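(* Let $1<p<\infty$ and set $\varphi_1(t)=e^{1-\frac1t}$. Then, with constants independent of $f$ and $t$, for all $f\in L^{p)}(\Omega)+L^{(p}(\Omega)$ and all $t\in(0,1)$, $$K\bigl(f,t;L^{p)},L^{(p}\bigr)\approx\sup_{0<s<\varphi_1(t)}(1-\log s)^{-\frac1p}\Bigl(\int_s^{\varphi_1(t)}f_*^p(x)dx\Bigr)^{\frac1p}+t\int_{\varphi_1(t)}^1(1-\log s)^{-\frac1p}\Bigl(\int_{\varphi_1(t)}^s f_*^p(x)dx\Bigr)^{\frac1p}\frac{ds}{s}.$$
   Context: $\Omega\subset\mathbb R^n$ is a bounded open set with $|\Omega|=1$; $f_*$ is the decreasing rearrangement of $|f|$ on $(0,1)$; $\log$ is the natural logarithm. Grand Lebesgue space $L^{p)}(\Omega)$: measurable $f$ with $\|f\|_{p)}=\sup_{0<t<1}(1-\log t)^{-1/p}(\int_t^1 f_*^p)^{1/p}<\infty$. Small Lebesgue space $L^{(p}(\Omega)$: measurable $f$ with $\|f\|_{(p}=\int_0^1(1-\log t)^{-1/p}(\int_0^t f_*^p)^{1/p}\frac{dt}{t}<\infty$. K-functional: $K(g,t;X_0,X_1)=\inf_{g=g_0+g_1}(\|g_0\|_{X_0}+t\|g_1\|_{X_1})$. *)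

theory Defs
  imports "HOL-Analysis.Analysis"
begin

text \<open>Real power of an extended nonnegative real (used only with positive exponents):
  \<infinity> to a positive power is \<infinity>.\<close>
definition enn_powr :: "ennreal \<Rightarrow> real \<Rightarrow> ennreal" where
  "enn_powr x a = (if x = \<infinity> then \<infinity> else ennreal (enn2real x powr a))"

definition drearr :: "'a::euclidean_space set \<Rightarrow> ('a \<Rightarrow> real) \<Rightarrow> real \<Rightarrow> real" where
  "drearr \<Omega> f t = Inf {y. 0 \<le> y \<and> emeasure lebesgue {x\<in>\<Omega>. \<bar>f x\<bar> > y} \<le> ennreal t}"

definition grand_norm :: "real \<Rightarrow> 'a::euclidean_space set \<Rightarrow> ('a \<Rightarrow> real) \<Rightarrow> ennreal" where
  "grand_norm p \<Omega> f = (SUP t\<in>{0<..<1}. ennreal ((1 - ln t) powr (-1/p)) *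
      enn_powr (\<integral>\<^sup>+ x\<in>{t..1}. ennreal (drearr \<Omega> f x powr p) \<partial>lborel) (1/p))"

definition small_norm :: "real \<Rightarrow> 'a::euclidean_space set \<Rightarrow> ('a \<Rightarrow> real) \<Rightarrow> ennreal" where
  "small_norm p \<Omega> f = (\<integral>\<^sup>+ t\<in>{0<..<1}. ennreal ((1 - ln t) powr (-1/p) / t) *
      enn_powr (\<integral>\<^sup>+ x\<in>{0..t}. ennreal (drearr \<Omega> f x powr p) \<partial>lborel) (1/p) \<partial>lborel)"

definition in_grand :: "real \<Rightarrow> 'a::euclidean_space set \<Rightarrow> ('a \<Rightarrow> real) \<Rightarrow> bool" where
  "in_grand p \<Omega> g \<longleftrightarrow> g \<in> borel_measurable lebesgue \<and> grand_norm p \<Omega> g < \<infinity>"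

definition in_small :: "real \<Rightarrow> 'a::euclidean_space set \<Rightarrow> ('a \<Rightarrow> real) \<Rightarrow> bool" where
  "in_small p \<Omega> g \<longleftrightarrow> g \<in> borel_measurable lebesgue \<and> small_norm p \<Omega> g < \<infinity>"

definition in_sum_space :: "real \<Rightarrow> 'a::euclidean_space set \<Rightarrow> ('a \<Rightarrow> real) \<Rightarrow> bool" where
  "in_sum_space p \<Omega> f \<longleftrightarrow> (\<exists>g0 g1. in_grand p \<Omega> g0 \<and> in_small p \<Omega> g1 \<and>
      (\<forall>x\<in>\<Omega>. f x = g0 x + g1 x))"

definition Kfun :: "real \<Rightarrow> 'a::euclidean_space set \<Rightarrow> ('a \<Rightarrow> real) \<Rightarrow> real \<Rightarrow> ennreal" where
  "Kfun p \<Omega> f t = (INF (g0, g1)\<in>{(g0, g1). in_grand p \<Omega> g0 \<and> in_small p \<Omega> g1 \<and>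
      (\<forall>x\<in>\<Omega>. f x = g0 x + g1 x)}. grand_norm p \<Omega> g0 + ennreal t * small_norm p \<Omega> g1)"

definition phi1 :: "real \<Rightarrow> real" where
  "phi1 t = exp (1 - 1 / t)"

definition Krhs :: "real \<Rightarrow> 'a::euclidean_space set \<Rightarrow> ('a \<Rightarrow> real) \<Rightarrow> real \<Rightarrow> ennreal" where
  "Krhs p \<Omega> f t =
     (SUP s\<in>{0<..<phi1 t}. ennreal ((1 - ln s) powr (-1/p)) *
        enn_powr (\<integral>\<^sup>+ x\<in>{s..phi1 t}. ennreal (drearr \<Omega> f x powr p) \<partial>lborel) (1/p))
   + ennreal t * (\<integral>\<^sup>+ s\<in>{phi1 t..1}. ennreal ((1 - ln s) powr (-1/p) / s) *
        enn_powr (\<integral>\<^sup>+ x\<in>{phi1 t..s}. ennreal (drearr \<Omega> f x powr p) \<partial>lborel) (1/p) \<partial>lborel)"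

end

theory Submission
  imports Defs
begin



context
  fixes \<Omega> :: "'a::euclidean_space set"
  assumes \<Omega>sets: "\<Omega> \<in> sets lebesgue" and \<Omega>fin: "emeasure lebesgue \<Omega> = 1"
begin

lemma D_sets:
  fixes f :: "'a \<Rightarrow> real"
  assumes "f \<in> borel_measurable lebesgue"
  shows "{x\<in>\<Omega>. y < \<bar>f x\<bar>} \<in> sets lebesgue"
proof -
  have "(\<lambda>x. \<bar>f x\<bar>) \<in> borel_measurable lebesgue" using assms by measurable
  then have "{x\<in>space lebesgue. y < \<bar>f x\<bar>} \<in> sets lebesgue" by (simp add: borel_measurable_iff_greater)
  then have "\<Omega> \<inter> {x\<in>space lebesgue. y < \<bar>f x\<bar>} \<in> sets lebesgue" using \<Omega>sets by auto
  moreover have "\<Omega> \<inter> {x\<in>space lebesgue. y < \<bar>f x\<bar>} = {x\<in>\<Omega>. y < \<bar>f x\<bar>}" by auto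
  ultimately show ?thesis by simp
qed

lemma D_fin:
  fixes f :: "'a \<Rightarrow> real"
  shows "emeasure lebesgue {x\<in>\<Omega>. y < \<bar>f x\<bar>} \<le> 1"
  using emeasure_mono[of "{x\<in>\<Omega>. y < \<bar>f x\<bar>}" \<Omega> lebesgue] \<Omega>sets \<Omega>fin by auto

lemma drearr_le:
  fixes f :: "'a \<Rightarrow> real"
  assumes "0 \<le> y" "emeasure lebesgue {x\<in>\<Omega>. y < \<bar>f x\<bar>} \<le> ennreal t"
  shows "drearr \<Omega> f t \<le> y"
  unfolding drearr_def by (rule cInf_lower) (use assms in auto)

lemma S_nonempty:
  fixes f :: "'a \<Rightarrow> real"
  assumes f: "f \<in> borel_measurable lebesgue" and t: "0 < t"
  shows "\<exists>y. 0 \<le> y \<and> emeasure lebesgue {x\<in>\<Omega>. y < \<bar>f x\<bar>} \<le> ennreal t"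
proof -
  define A where "A n = {x\<in>\<Omega>. real n < \<bar>f x\<bar>}" for n :: nat
  have "(INF n. emeasure lebesgue (A n)) = emeasure lebesgue (\<Inter>n. A n)"
  proof (rule INF_emeasure_decseq)
    show "range A \<subseteq> sets lebesgue" using D_sets[OF f] by (auto simp: A_def)
    show "decseq A" unfolding decseq_def A_def by auto
    show "emeasure lebesgue (A i) \<noteq> \<infinity>" for i
      using D_fin[of "real i" f] unfolding A_def by (auto simp: top_unique)
  qed
  moreover have "(\<Inter>n. A n) = {}"
  proof -
    have "x \<notin> A (nat \<lceil>\<bar>f x\<bar>\<rceil>)" for x
    proof -
      have "\<bar>f x\<bar> \<le> real (nat \<lceil>\<bar>f x\<bar>\<rceil>)" by (rule real_nat_ceiling_ge)
      then show ?thesis by (simp only: A_def mem_Collect_eq) linarith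
    qed
    then show ?thesis by blast
  qed
  ultimately have "(INF n. emeasure lebesgue (A n)) < ennreal t" using t by simp
  then obtain n where "emeasure lebesgue (A n) < ennreal t" by (auto simp: INF_less_iff)
  then show ?thesis unfolding A_def by (intro exI[of _ "real n"]) auto
qed

lemma drearr_nonneg:
  fixes f :: "'a \<Rightarrow> real"
  assumes f: "f \<in> borel_measurable lebesgue" and t: "0 < t"
  shows "0 \<le> drearr \<Omega> f t"
  unfolding drearr_def using S_nonempty[OF f t] by (intro cInf_greatest) auto

lemma drearr_attain:
  fixes f :: "'a \<Rightarrow> real"
  assumes f: "f \<in> borel_measurable lebesgue" and t: "0 < t"
  shows "emeasure lebesgue {x\<in>\<Omega>. drearr \<Omega> f t < \<bar>f x\<bar>} \<le> ennreal t"
proof -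
  define m where "m = drearr \<Omega> f t"
  define S where "S = {y. 0 \<le> y \<and> emeasure lebesgue {x\<in>\<Omega>. y < \<bar>f x\<bar>} \<le> ennreal t}"
  have mS: "m = Inf S" unfolding m_def S_def drearr_def by simp
  have Sne: "S \<noteq> {}" using S_nonempty[OF f t] unfolding S_def by auto
  have bdd: "bdd_below S" unfolding S_def by (auto intro: bdd_belowI[of _ 0])
  define A where "A n = {x\<in>\<Omega>. m + 1 / real (Suc n) < \<bar>f x\<bar>}" for n
  have An: "emeasure lebesgue (A n) \<le> ennreal t" for n
  proof -
    have "Inf S < m + 1 / real (Suc n)" using mS by simp
    then obtain y where y: "y \<in> S" "y < m + 1 / real (Suc n)"
      using cInf_lessD[OF Sne] by blast
    have "A n \<subseteq> {x\<in>\<Omega>. y < \<bar>f x\<bar>}" unfolding A_def using y(2) by auto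
    then have "emeasure lebesgue (A n) \<le> emeasure lebesgue {x\<in>\<Omega>. y < \<bar>f x\<bar>}"
      by (intro emeasure_mono D_sets[OF f])
    also have "\<dots> \<le> ennreal t" using y(1) unfolding S_def by auto
    finally show ?thesis .
  qed
  have "(SUP n. emeasure lebesgue (A n)) = emeasure lebesgue (\<Union>n. A n)"
  proof (rule SUP_emeasure_incseq)
    show "range A \<subseteq> sets lebesgue" using D_sets[OF f] by (auto simp: A_def)
    show "incseq A" unfolding incseq_def A_def
    proof (intro allI impI subsetI)
      fix i j x assume "i \<le> j" "x \<in> {x \<in> \<Omega>. m + 1 / real (Suc i) < \<bar>f x\<bar>}"
      moreover have "1 / real (Suc j) \<le> 1 / real (Suc i)" using \<open>i \<le> j\<close>
        by (simp add: frac_le)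
      ultimately show "x \<in> {x \<in> \<Omega>. m + 1 / real (Suc j) < \<bar>f x\<bar>}" by auto
    qed
  qed
  moreover have "(\<Union>n. A n) = {x\<in>\<Omega>. m < \<bar>f x\<bar>}"
  proof
    show "(\<Union>n. A n) \<subseteq> {x\<in>\<Omega>. m < \<bar>f x\<bar>}" unfolding A_def
      by (auto intro: less_trans[rotated])
    show "{x\<in>\<Omega>. m < \<bar>f x\<bar>} \<subseteq> (\<Union>n. A n)"
    proof
      fix x assume x: "x \<in> {x\<in>\<Omega>. m < \<bar>f x\<bar>}"
      then obtain n where "1 / real (Suc n) < \<bar>f x\<bar> - m"
        using reals_Archimedean[of "\<bar>f x\<bar> - m"] by (auto simp: inverse_eq_divide)
      then have "m + 1 / real (Suc n) < \<bar>f x\<bar>" by linarith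
      then show "x \<in> (\<Union>n. A n)" using x unfolding A_def by blast
    qed
  qed
  ultimately have "emeasure lebesgue {x\<in>\<Omega>. m < \<bar>f x\<bar>} = (SUP n. emeasure lebesgue (A n))" by simp
  also have "\<dots> \<le> ennreal t" using An by (rule SUP_least)
  finally show ?thesis unfolding m_def .
qed

lemma drearr_antimono:
  fixes f :: "'a \<Rightarrow> real"
  assumes f: "f \<in> borel_measurable lebesgue" and s: "0 < s" "s \<le> t"
  shows "drearr \<Omega> f t \<le> drearr \<Omega> f s"
proof (rule drearr_le)
  show "0 \<le> drearr \<Omega> f s" by (rule drearr_nonneg[OF f s(1)])
  have "emeasure lebesgue {x\<in>\<Omega>. drearr \<Omega> f s < \<bar>f x\<bar>} \<le> ennreal s"
    by (rule drearr_attain[OF f s(1)])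
  also have "\<dots> \<le> ennreal t" using s(2) by (rule ennreal_leI)
  finally show "emeasure lebesgue {x\<in>\<Omega>. drearr \<Omega> f s < \<bar>f x\<bar>} \<le> ennreal t" .
qed

lemma drearr_nonpos: "t \<le> 0 \<Longrightarrow> drearr \<Omega> f t = drearr \<Omega> f 0"
  unfolding drearr_def by (simp add: ennreal_neg)

lemma drearr_meas:
  fixes f :: "'a \<Rightarrow> real"
  assumes f: "f \<in> borel_measurable lebesgue"
  shows "drearr \<Omega> f \<in> borel_measurable borel"
proof -
  have m1: "mono_on {..0} (\<lambda>x. - drearr \<Omega> f x)"
  proof (rule mono_onI)
    fix r s :: real assume "r \<in> {..0}" "s \<in> {..0}" "r \<le> s"
    then show "- drearr \<Omega> f r \<le> - drearr \<Omega> f s"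
      using drearr_nonpos[of r f] drearr_nonpos[of s f] by simp
  qed
  have m2: "mono_on {0<..} (\<lambda>x. - drearr \<Omega> f x)"
  proof (rule mono_onI)
    fix r s :: real assume "r \<in> {0<..}" "s \<in> {0<..}" "r \<le> s"
    then show "- drearr \<Omega> f r \<le> - drearr \<Omega> f s"
      using drearr_antimono[OF f, of r s] by simp
  qed
  have "(\<lambda>x. - drearr \<Omega> f x) \<in> borel_measurable borel"
  proof (rule borel_measurable_piecewise_mono[of "{{..0},{0<..}}"])
    show "mono_on c (\<lambda>x. - drearr \<Omega> f x)" if "c \<in> {{..0},{0<..}}" for c
      using that m1 m2 by blast
    show "\<Union> {{..0::real}, {0<..}} = UNIV" by auto
  qed auto
  then have "(\<lambda>x. - (- drearr \<Omega> f x)) \<in> borel_measurable borel" by measurable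
  then show ?thesis by simp
qed

lemma drearr_subadd:
  fixes f g0 g1 :: "'a \<Rightarrow> real"
  assumes g0: "g0 \<in> borel_measurable lebesgue" and g1: "g1 \<in> borel_measurable lebesgue"
    and s: "0 < s1" "0 < s2" and le: "\<And>x. x \<in> \<Omega> \<Longrightarrow> \<bar>f x\<bar> \<le> \<bar>g0 x\<bar> + \<bar>g1 x\<bar>"
  shows "drearr \<Omega> f (s1 + s2) \<le> drearr \<Omega> g0 s1 + drearr \<Omega> g1 s2"
proof (rule drearr_le)
  let ?a = "drearr \<Omega> g0 s1" and ?b = "drearr \<Omega> g1 s2"
  show "0 \<le> ?a + ?b" using drearr_nonneg[OF g0 s(1)] drearr_nonneg[OF g1 s(2)] by simp
  have "{x\<in>\<Omega>. ?a + ?b < \<bar>f x\<bar>} \<subseteq> {x\<in>\<Omega>. ?a < \<bar>g0 x\<bar>} \<union> {x\<in>\<Omega>. ?b < \<bar>g1 x\<bar>}"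
    using le by force
  then have "emeasure lebesgue {x\<in>\<Omega>. ?a + ?b < \<bar>f x\<bar>}
      \<le> emeasure lebesgue ({x\<in>\<Omega>. ?a < \<bar>g0 x\<bar>} \<union> {x\<in>\<Omega>. ?b < \<bar>g1 x\<bar>})"
    by (intro emeasure_mono) (auto intro: D_sets g0 g1)
  also have "\<dots> \<le> emeasure lebesgue {x\<in>\<Omega>. ?a < \<bar>g0 x\<bar>} + emeasure lebesgue {x\<in>\<Omega>. ?b < \<bar>g1 x\<bar>}"
    by (intro emeasure_subadditive) (auto intro: D_sets g0 g1)
  also have "\<dots> \<le> ennreal s1 + ennreal s2"
    by (intro add_mono drearr_attain g0 g1 s)
  also have "\<dots> = ennreal (s1 + s2)" using s by (simp add: ennreal_plus)
  finally show "emeasure lebesgue {x\<in>\<Omega>. ?a + ?b < \<bar>f x\<bar>} \<le> ennreal (s1 + s2)" .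
qed

end


lemma enn_powr_ennreal: "0 \<le> r \<Longrightarrow> enn_powr (ennreal r) a = ennreal (r powr a)"
  by (simp add: enn_powr_def)

lemma enn_powr_zero[simp]: "enn_powr 0 a = 0"
  by (simp add: enn_powr_def)

lemma enn_powr_mono:
  assumes "x \<le> y" "0 < a" shows "enn_powr x a \<le> enn_powr y a"
proof (cases "y = \<infinity>")
  case True then show ?thesis by (simp add: enn_powr_def)
next
  case False
  then have "x \<noteq> \<infinity>" using assms(1) by (auto simp: top_unique)
  with False assms show ?thesis
    by (cases x; cases y) (auto simp: enn_powr_def intro!: ennreal_leI powr_mono2)
qed

lemma real_powr_subadd:
  fixes u v a :: real
  assumes "0 \<le> u" "0 \<le> v" "0 < a" "a \<le> 1"
  shows "(u + v) powr a \<le> u powr a + v powr a"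
proof (cases "u + v = 0")
  case True then show ?thesis using assms by simp
next
  case False
  then have s: "0 < u + v" using assms by simp
  have "u / (u+v) \<le> (u/(u+v)) powr a"
    using powr_mono'[of a 1 "u/(u+v)"] assms s by (simp add: divide_le_eq)
  moreover have "v / (u+v) \<le> (v/(u+v)) powr a"
    using powr_mono'[of a 1 "v/(u+v)"] assms s by (simp add: divide_le_eq)
  moreover have "u/(u+v) + v/(u+v) = 1" using s by (simp add: add_divide_distrib[symmetric])
  ultimately have "1 \<le> (u/(u+v)) powr a + (v/(u+v)) powr a" by linarith
  also have "\<dots> = (u powr a + v powr a) / (u+v) powr a"
    by (simp only: powr_divide add_divide_distrib)
  finally have "1 \<le> (u powr a + v powr a) / (u+v) powr a" .
  moreover have "0 < (u+v) powr a" using s by simp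
  ultimately show ?thesis by (metis le_divide_eq_1_pos)
qed

lemma enn_powr_subadd:
  assumes "0 < a" "a \<le> 1"
  shows "enn_powr (x + y) a \<le> enn_powr x a + enn_powr y a"
proof (cases "x = \<infinity> \<or> y = \<infinity>")
  case True then show ?thesis by (auto simp: enn_powr_def)
next
  case False
  then obtain u v where "x = ennreal u" "y = ennreal v" "0 \<le> u" "0 \<le> v"
    by (cases x; cases y) auto
  moreover have "(u + v) powr a \<le> u powr a + v powr a"
    using real_powr_subadd[of u v a] assms calculation by simp
  ultimately show ?thesis
    by (simp add: enn_powr_def ennreal_plus[symmetric] del: ennreal_plus)
qed

lemma enn_powr_meas[measurable]:
  "f \<in> borel_measurable M \<Longrightarrow> (\<lambda>x. enn_powr (f x) a) \<in> borel_measurable M"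
proof -
  assume f[measurable]: "f \<in> borel_measurable M"
  have s: "{x\<in>space M. f x = \<infinity>} \<in> sets M"
  proof -
    have "f -` {\<infinity>} \<inter> space M \<in> sets M" by (rule measurable_sets[OF f]) auto
    moreover have "{x\<in>space M. f x = \<infinity>} = f -` {\<infinity>} \<inter> space M" by auto
    ultimately show ?thesis by simp
  qed
  have "(\<lambda>x. ennreal (enn2real (f x) powr a)) \<in> borel_measurable M" by measurable
  then show ?thesis unfolding enn_powr_def
    by (intro measurable_If[OF measurable_const _ s]) auto
qed

lemma int_meas:
  fixes h :: "real \<Rightarrow> real"
  assumes hm[measurable]: "h \<in> borel_measurable borel"
  shows "(\<lambda>u. \<integral>\<^sup>+ x\<in>{\<alpha>..u}. ennreal (h x powr p) \<partial>lborel) \<in> borel_measurable borel"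
proof -
  have *: "(\<lambda>u. \<integral>\<^sup>+ x\<in>{\<alpha>..u}. ennreal (h x powr p) \<partial>lborel) =
     (\<lambda>u. \<integral>\<^sup>+ x. (\<lambda>(u,x). ennreal (h x powr p) * (if \<alpha> \<le> x \<and> x \<le> u then 1 else 0)) (u,x) \<partial>lborel)"
    by (auto simp: indicator_def intro!: ext nn_integral_cong)
  have m1: "(\<lambda>z::real\<times>real. ennreal (h (snd z) powr p)) \<in> borel_measurable (borel \<Otimes>\<^sub>M lborel)"
    by measurable
  have m2: "{z::real\<times>real \<in> space (borel \<Otimes>\<^sub>M lborel). \<alpha> \<le> snd z \<and> snd z \<le> fst z} \<in> sets (borel \<Otimes>\<^sub>M lborel)"
    by measurable
  have "(\<lambda>z::real\<times>real. ennreal (h (snd z) powr p) * (if \<alpha> \<le> snd z \<and> snd z \<le> fst z then 1 else 0))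
      \<in> borel_measurable (borel \<Otimes>\<^sub>M lborel)"
    by (intro borel_measurable_times_ennreal m1 measurable_If[OF measurable_const measurable_const m2]) auto
  then have "(\<lambda>(u,x). ennreal (h x powr p) * (if \<alpha> \<le> x \<and> x \<le> u then 1 else 0)) \<in> borel_measurable (borel \<Otimes>\<^sub>M lborel)"
    by (simp add: case_prod_beta')
  from lborel.borel_measurable_nn_integral_fst[OF this] show ?thesis unfolding * by simp
qed

lemma enn_powr_mult:
  assumes "0 \<le> c" "0 < a"
  shows "enn_powr (ennreal c * x) a = ennreal (c powr a) * enn_powr x a"
proof (cases "x = \<infinity>")
  case True
  show ?thesis
  proof (cases "c = 0")
    case True
    then show ?thesis using \<open>x = \<infinity>\<close> by (simp add: enn_powr_def)
  next
    case False
    then have "0 < c" using assms by simp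
    then have "ennreal c * x = \<infinity>" "ennreal (c powr a) * \<infinity> = \<infinity>"
      using \<open>x = \<infinity>\<close> by (simp_all add: ennreal_mult_top)
    then show ?thesis using \<open>x = \<infinity>\<close> by (simp add: enn_powr_def)
  qed
next
  case False
  then obtain r where r: "x = ennreal r" "0 \<le> r" by (cases x) auto
  have "ennreal c * x = ennreal (c * r)" using r assms by (simp add: ennreal_mult)
  then have "enn_powr (ennreal c * x) a = ennreal ((c * r) powr a)"
    using r assms by (simp add: enn_powr_ennreal)
  also have "\<dots> = ennreal (c powr a) * ennreal (r powr a)"
    by (simp add: powr_mult ennreal_mult)
  also have "\<dots> = ennreal (c powr a) * enn_powr x a" using r by (simp add: enn_powr_ennreal)
  finally show ?thesis .
qed


lemma Vt_meas: "(\<lambda>u::real. ennreal ((1 - ln u) powr (-1/p) / u)) \<in> borel_measurable borel"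
  by measurable

lemma int_V:
  fixes p c :: real
  assumes p: "1 < p" and c: "0 < c" "c \<le> 1"
  shows "(\<integral>\<^sup>+ u\<in>{c..1}. ennreal ((1 - ln u) powr (-1/p) / u) \<partial>lborel)
       = ennreal (p/(p-1) * ((1 - ln c) powr (1-1/p) - 1))"
proof -
  define F where "F u = - (p/(p-1)) * (1 - ln u) powr (1-1/p)" for u
  have D: "DERIV F u :> (1 - ln u) powr (-1/p) / u" if u: "u \<in> {c..1}" for u
  proof -
    have u0: "0 < u" "u \<le> 1" using u c by auto
    then have L: "0 < 1 - ln u" by (smt (verit) ln_le_zero_iff)
    have "DERIV (\<lambda>u. 1 - ln u) u :> - (1/u)"
      using u0 by (auto intro!: derivative_eq_intros)
    from DERIV_chain2[OF has_real_derivative_powr[OF L, of "1-1/p"] this]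
    have "DERIV (\<lambda>u. (1 - ln u) powr (1-1/p)) u :> (1-1/p) * (1 - ln u) powr (1-1/p-1) * (- (1/u))" .
    then have "DERIV F u :> - (p/(p-1)) * ((1-1/p) * (1 - ln u) powr (1-1/p-1) * (- (1/u)))"
      unfolding F_def by (rule DERIV_cmult)
    moreover have "- (p/(p-1)) * ((1-1/p) * (1 - ln u) powr (1-1/p-1) * (- (1/u))) = (1 - ln u) powr (-1/p) / u"
    proof -
      have e2: "p/(p-1)*(1-1/p) = 1" using p by (simp add: field_simps)
      have ring: "\<And>Q R Y w :: real. - Q * (R * Y * (- w)) = (Q*R) * (Y*w)" by (simp add: algebra_simps)
      have "- (p/(p-1)) * ((1-1/p) * (1 - ln u) powr (1-1/p-1) * (- (1/u)))
          = (p/(p-1)*(1-1/p)) * ((1 - ln u) powr (1-1/p-1) * (1/u))" by (rule ring)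
      also have "\<dots> = (1 - ln u) powr (-1/p) / u" unfolding e2 by simp
      finally show ?thesis .
    qed
    ultimately show ?thesis by simp
  qed
  have "(\<integral>\<^sup>+ u. ennreal ((1 - ln u) powr (-1/p) / u) * indicator {c..1} u \<partial>lborel) = F 1 - F c"
  proof (rule nn_integral_FTC_Icc)
    show "(\<lambda>u. (1 - ln u) powr (-1/p) / u) \<in> borel_measurable borel" by measurable
    show "DERIV F x :> (1 - ln x) powr (-1/p) / x" if "x \<in> {c..1}" for x using D that .
    show "0 \<le> (1 - ln x) powr (-1/p) / x" if "x \<in> {c..1}" for x using that c by auto
  qed (use c in auto)
  also have "F 1 - F c = p/(p-1) * ((1 - ln c) powr (1-1/p) - 1)"
  proof -
    have "F 1 = - (p/(p-1))" unfolding F_def by simp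
    then show ?thesis unfolding F_def by (simp add: right_diff_distrib)
  qed
  finally show ?thesis by simp
qed


lemma int_upow:
  fixes p \<phi> :: real
  assumes p: "1 < p" and \<phi>: "0 \<le> \<phi>"
  shows "(\<integral>\<^sup>+ u\<in>{0..\<phi>}. ennreal (u powr (1/p - 1)) \<partial>lborel) = ennreal (p * \<phi> powr (1/p))"
proof -
  have gt: "1/p - 1 > -1" using p by simp
  have h1: "((\<lambda>x. x powr (1/p - 1)) has_integral (\<phi> powr (1/p - 1 + 1) / (1/p - 1 + 1))) {0..\<phi>}"
    by (rule has_integral_powr_from_0[OF gt \<phi>])
  have e1: "\<phi> powr (1/p - 1 + 1) / (1/p - 1 + 1) = p * \<phi> powr (1/p)"
    using p by simp
  have I: "((\<lambda>x. x powr (1/p - 1)) has_integral (p * \<phi> powr (1/p))) {0..\<phi>}"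
    using h1 unfolding e1 .
  have eq: "(\<lambda>u. u powr (1/p - 1) * indicator {0..\<phi>} u) = (\<lambda>u. if u \<in> {0..\<phi>} then u powr (1/p - 1) else 0)"
    by (auto simp: indicator_def)
  have "(\<integral>\<^sup>+ u. ennreal (u powr (1/p - 1) * indicator {0..\<phi>} u) \<partial>lborel) = ennreal (p * \<phi> powr (1/p))"
  proof (rule nn_integral_has_integral_lborel)
    show "(\<lambda>u. u powr (1/p - 1) * indicator {0..\<phi>} u) \<in> borel_measurable borel" by measurable
    show "0 \<le> x powr (1/p - 1) * indicator {0..\<phi>} x" for x :: real by (auto simp: indicator_def)
    show "((\<lambda>u. u powr (1/p - 1) * indicator {0..\<phi>} u) has_integral (p * \<phi> powr (1/p))) UNIV"
      unfolding eq has_integral_restrict_UNIV by (rule I)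
  qed
  moreover have "(\<integral>\<^sup>+ u. ennreal (u powr (1/p - 1) * indicator {0..\<phi>} u) \<partial>lborel)
      = (\<integral>\<^sup>+ u\<in>{0..\<phi>}. ennreal (u powr (1/p - 1)) \<partial>lborel)"
    by (intro nn_integral_cong) (auto simp: indicator_def)
  ultimately show ?thesis by simp
qed

lemma int_scale:
  fixes k :: "real \<Rightarrow> real"
  assumes [measurable]: "k \<in> borel_measurable borel"
  shows "(\<integral>\<^sup>+ x\<in>{\<alpha>..\<beta>}. ennreal (k (x/2) powr p) \<partial>lborel)
       = 2 * (\<integral>\<^sup>+ x\<in>{\<alpha>/2..\<beta>/2}. ennreal (k x powr p) \<partial>lborel)"
proof -
  have "(\<integral>\<^sup>+ x. ennreal (k (x/2) powr p) * indicator {\<alpha>..\<beta>} x \<partial>lborel)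
      = ennreal \<bar>2\<bar> * (\<integral>\<^sup>+ x. ennreal (k ((0 + 2 * x)/2) powr p) * indicator {\<alpha>..\<beta>} (0 + 2 * x) \<partial>lborel)"
    by (rule nn_integral_real_affine) auto
  also have "(\<lambda>x::real. ennreal (k ((0 + 2 * x)/2) powr p) * indicator {\<alpha>..\<beta>} (0 + 2 * x))
     = (\<lambda>x. ennreal (k x powr p) * indicator {\<alpha>/2..\<beta>/2} x)"
    by (auto simp: indicator_def intro!: ext)
  finally show ?thesis by simp
qed



definition Ih :: "real \<Rightarrow> (real \<Rightarrow> real) \<Rightarrow> real \<Rightarrow> real \<Rightarrow> ennreal" where
  "Ih p h \<alpha> \<beta> = (\<integral>\<^sup>+ x\<in>{\<alpha>..\<beta>}. ennreal (h x powr p) \<partial>lborel)"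

lemma RA:
  fixes p x :: real assumes p: "1 < p" and x: "1 \<le> x"
  shows "x powr (-1/p) \<le> 2 * (x + ln 2) powr (-1/p)"
proof -
  have l2: "ln (2::real) \<le> 1" using ln_le_minus_one[of 2] by simp
  have l0: "0 < ln (2::real)" by simp
  have 1: "(2 * x) powr (-1/p) \<le> (x + ln 2) powr (-1/p)"
  proof (rule powr_mono2')
    show "-1/p \<le> 0" using p by simp
    show "0 < x + ln 2" using x l0 by linarith
    show "x + ln 2 \<le> 2 * x" using x l2 by linarith
  qed
  moreover have "(2 * x) powr (-1/p) = 2 powr (-1/p) * x powr (-1/p)" using x by (simp add: powr_mult)
  moreover have "1/2 \<le> (2::real) powr (-1/p)"
  proof -
    have "(2::real) powr (-1) \<le> 2 powr (-1/p)" using p by (intro powr_mono) (auto simp: field_simps)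
    then show ?thesis by (simp add: powr_minus)
  qed
  moreover have "0 \<le> x powr (-1/p)" by simp
  ultimately have "(1/2) * x powr (-1/p) \<le> 2 powr (-1/p) * x powr (-1/p)"
    by (intro mult_right_mono) auto
  with \<open>(2 * x) powr (-1/p) \<le> (x + ln 2) powr (-1/p)\<close>
    \<open>(2 * x) powr (-1/p) = 2 powr (-1/p) * x powr (-1/p)\<close>
  show ?thesis by linarith
qed

lemma L_half: "0 < (s::real) \<Longrightarrow> 1 - ln (s/2) = (1 - ln s) + ln 2"
  by (simp add: ln_div)

lemma phi_props:
  assumes t: "0 < t" "t < 1"
  shows "0 < phi1 t" "phi1 t < 1" "1 - ln (phi1 t) = 1/t"
proof -
  show "0 < phi1 t" by (simp add: phi1_def)
  have "1 - 1/t < 0" using t by (simp add: field_simps)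
  then show "phi1 t < 1" by (simp add: phi1_def)
  show "1 - ln (phi1 t) = 1/t" by (simp add: phi1_def)
qed

lemma L_ge1: "0 < s \<Longrightarrow> s \<le> 1 \<Longrightarrow> 1 \<le> 1 - ln (s::real)"
  by simp

lemma RD:
  fixes p t s :: real
  assumes p: "1 < p" and t: "0 < t" "t < 1" and s: "0 < s" "s \<le> phi1 t"
  shows "(1 - ln s) powr (-1/p) \<le> t powr (1/p)"
proof -
  have "ln s \<le> ln (phi1 t)" using s phi_props[OF t] by simp
  then have "1/t \<le> 1 - ln s" using phi_props(3)[OF t] by simp
  then have "(1 - ln s) powr (-1/p) \<le> (1/t) powr (-1/p)"
    using p t by (intro powr_mono2') auto
  also have "(1/t) powr (-1/p) = t powr (1/p)"
    using t by (simp add: powr_divide powr_minus_divide divide_inverse powr_minus inverse_powr)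
  finally show ?thesis .
qed

lemma RP:
  fixes y u v p :: real
  assumes "0 \<le> y" "y \<le> u + v" "0 \<le> u" "0 \<le> v" "0 < p"
  shows "y powr p \<le> 2 powr p * (u powr p + v powr p)"
proof -
  have "y powr p \<le> (2 * max u v) powr p" using assms by (intro powr_mono2) auto
  also have "\<dots> = 2 powr p * max u v powr p" using assms by (simp add: powr_mult)
  also have "max u v powr p \<le> u powr p + v powr p" by (simp add: max_def)
  then have "2 powr p * max u v powr p \<le> 2 powr p * (u powr p + v powr p)" by simp
  finally show ?thesis .
qed

lemma Isplit:
  fixes h h0 h1 :: "real \<Rightarrow> real"
  assumes p: "1 < p" and m[measurable]: "h0 \<in> borel_measurable borel" "h1 \<in> borel_measurable borel"
    and nn: "\<And>x. 0 < x \<Longrightarrow> 0 \<le> h x \<and> 0 \<le> h0 x \<and> 0 \<le> h1 x"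
    and sub: "\<And>x. 0 < x \<Longrightarrow> h x \<le> h0 (x/2) + h1 (x/2)"
    and \<alpha>: "0 < \<alpha>"
  shows "Ih p h \<alpha> \<beta> \<le> ennreal (2 powr (p+1)) * (Ih p h0 (\<alpha>/2) (\<beta>/2) + Ih p h1 (\<alpha>/2) (\<beta>/2))"
proof -
  have "Ih p h \<alpha> \<beta> \<le> (\<integral>\<^sup>+ x. ennreal (2 powr p) *
      (ennreal (h0 (x/2) powr p) * indicator {\<alpha>..\<beta>} x + ennreal (h1 (x/2) powr p) * indicator {\<alpha>..\<beta>} x) \<partial>lborel)"
    unfolding Ih_def
  proof (intro nn_integral_mono)
    fix x :: real
    show "ennreal (h x powr p) * indicator {\<alpha>..\<beta>} x \<le> ennreal (2 powr p) *
      (ennreal (h0 (x/2) powr p) * indicator {\<alpha>..\<beta>} x + ennreal (h1 (x/2) powr p) * indicator {\<alpha>..\<beta>} x)"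
    proof (cases "x \<in> {\<alpha>..\<beta>}")
      case True
      then have x: "0 < x" using \<alpha> by auto
      have "h x powr p \<le> 2 powr p * (h0 (x/2) powr p + h1 (x/2) powr p)"
        using nn[OF x] nn[of "x/2"] x sub[OF x] p by (intro RP) auto
      then show ?thesis using True
        by (simp add: ennreal_mult[symmetric] ennreal_plus[symmetric] del: ennreal_plus)
    qed simp
  qed
  also have "\<dots> = ennreal (2 powr p) * ((\<integral>\<^sup>+ x\<in>{\<alpha>..\<beta>}. ennreal (h0 (x/2) powr p) \<partial>lborel)
       + (\<integral>\<^sup>+ x\<in>{\<alpha>..\<beta>}. ennreal (h1 (x/2) powr p) \<partial>lborel))"
    by (simp add: nn_integral_cmult nn_integral_add)
  also have "\<dots> = ennreal (2 powr p) * (2 * Ih p h0 (\<alpha>/2) (\<beta>/2) + 2 * Ih p h1 (\<alpha>/2) (\<beta>/2))"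
    unfolding Ih_def by (simp add: int_scale)
  also have "\<dots> = ennreal (2 powr (p+1)) * (Ih p h0 (\<alpha>/2) (\<beta>/2) + Ih p h1 (\<alpha>/2) (\<beta>/2))"
  proof -
    have "ennreal (2 powr (p+1)) = ennreal (2 powr p) * 2"
      by (simp add: powr_add ennreal_mult)
    then show ?thesis by (simp add: distrib_left mult.assoc)
  qed
  finally show ?thesis .
qed

lemma Esplit:
  fixes p :: real and X Y Z :: ennreal
  assumes p: "1 < p" and le: "X \<le> ennreal (2 powr (p+1)) * (Y + Z)"
  shows "enn_powr X (1/p) \<le> ennreal (2 powr ((p+1)/p)) * (enn_powr Y (1/p) + enn_powr Z (1/p))"
proof -
  have a: "0 < 1/p" "1/p \<le> 1" using p by auto
  have "enn_powr X (1/p) \<le> enn_powr (ennreal (2 powr (p+1)) * (Y + Z)) (1/p)"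
    by (rule enn_powr_mono[OF le a(1)])
  also have "\<dots> = ennreal ((2 powr (p+1)) powr (1/p)) * enn_powr (Y + Z) (1/p)"
    by (rule enn_powr_mult) (use a in auto)
  also have "(2 powr (p+1)) powr (1/p) = 2 powr ((p+1)/p)" by (simp add: powr_powr)
  also have "ennreal (2 powr ((p+1)/p)) * enn_powr (Y + Z) (1/p)
      \<le> ennreal (2 powr ((p+1)/p)) * (enn_powr Y (1/p) + enn_powr Z (1/p))"
    by (intro mult_left_mono enn_powr_subadd a) simp
  finally show ?thesis .
qed

lemma Ih_mono_int:
  assumes "\<alpha>' \<le> \<alpha>" "\<beta> \<le> \<beta>'"
  shows "Ih p h \<alpha> \<beta> \<le> Ih p h \<alpha>' \<beta>'"
  unfolding Ih_def using assms
  by (intro nn_integral_mono) (auto simp: indicator_def)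

definition Wt :: "real \<Rightarrow> real \<Rightarrow> ennreal" where
  "Wt p s = ennreal ((1 - ln s) powr (-1/p))"

definition Gn :: "real \<Rightarrow> (real \<Rightarrow> real) \<Rightarrow> ennreal" where
  "Gn p h = (SUP s\<in>{0<..<1}. Wt p s * enn_powr (Ih p h s 1) (1/p))"

definition Sn :: "real \<Rightarrow> (real \<Rightarrow> real) \<Rightarrow> ennreal" where
  "Sn p h = (\<integral>\<^sup>+ u\<in>{0<..<1}. ennreal ((1 - ln u) powr (-1/p) / u) * enn_powr (Ih p h 0 u) (1/p) \<partial>lborel)"

definition An :: "real \<Rightarrow> (real \<Rightarrow> real) \<Rightarrow> real \<Rightarrow> ennreal" where
  "An p h \<phi> = (SUP s\<in>{0<..<\<phi>}. Wt p s * enn_powr (Ih p h s \<phi>) (1/p))"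

definition Bn :: "real \<Rightarrow> (real \<Rightarrow> real) \<Rightarrow> real \<Rightarrow> ennreal" where
  "Bn p h \<phi> = (\<integral>\<^sup>+ u\<in>{\<phi>..1}. ennreal ((1 - ln u) powr (-1/p) / u) * enn_powr (Ih p h \<phi> u) (1/p) \<partial>lborel)"

lemma Gn_upper: "0 < s \<Longrightarrow> s < 1 \<Longrightarrow> Wt p s * enn_powr (Ih p h s 1) (1/p) \<le> Gn p h"
  unfolding Gn_def by (rule SUP_upper) auto

lemma An_upper: "0 < s \<Longrightarrow> s < \<phi> \<Longrightarrow> Wt p s * enn_powr (Ih p h s \<phi>) (1/p) \<le> An p h \<phi>"
  unfolding An_def by (rule SUP_upper) auto

lemma Ih_meas:
  fixes h :: "real \<Rightarrow> real"
  assumes [measurable]: "h \<in> borel_measurable borel"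
  shows "(\<lambda>u. enn_powr (Ih p h \<alpha> u) a) \<in> borel_measurable borel"
  unfolding Ih_def by (intro enn_powr_meas int_meas) fact

lemma S_part:
  fixes h :: "real \<Rightarrow> real"
  assumes [measurable]: "h \<in> borel_measurable borel" and c: "0 < c"
  shows "(\<integral>\<^sup>+ u\<in>{c..1}. ennreal ((1 - ln u) powr (-1/p) / u) * enn_powr (Ih p h 0 u) (1/p) \<partial>lborel) \<le> Sn p h"
  unfolding Sn_def
proof (rule nn_integral_mono_AE)
  show "AE u in lborel. ennreal ((1 - ln u) powr (-1/p) / u) * enn_powr (Ih p h 0 u) (1/p) * indicator {c..1} u
     \<le> ennreal ((1 - ln u) powr (-1/p) / u) * enn_powr (Ih p h 0 u) (1/p) * indicator {0<..<1} u"
    using AE_lborel_singleton[of 1]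
  proof eventually_elim
    case (elim u)
    then show ?case using c by (auto simp: indicator_def)
  qed
qed

lemma S_lower:
  fixes h :: "real \<Rightarrow> real"
  assumes p: "1 < p" and [measurable]: "h \<in> borel_measurable borel" and c: "0 < c" "c \<le> 1"
  shows "ennreal (p/(p-1) * ((1 - ln c) powr (1-1/p) - 1)) * enn_powr (Ih p h 0 c) (1/p) \<le> Sn p h"
proof -
  have "ennreal (p/(p-1) * ((1 - ln c) powr (1-1/p) - 1)) * enn_powr (Ih p h 0 c) (1/p)
      = (\<integral>\<^sup>+ u\<in>{c..1}. ennreal ((1 - ln u) powr (-1/p) / u) \<partial>lborel) * enn_powr (Ih p h 0 c) (1/p)"
    using int_V[OF p c] by simp
  also have "\<dots> = (\<integral>\<^sup>+ u. ennreal ((1 - ln u) powr (-1/p) / u) * indicator {c..1} u * enn_powr (Ih p h 0 c) (1/p) \<partial>lborel)"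
    by (rule nn_integral_multc[symmetric]) measurable
  also have "\<dots> \<le> (\<integral>\<^sup>+ u\<in>{c..1}. ennreal ((1 - ln u) powr (-1/p) / u) * enn_powr (Ih p h 0 u) (1/p) \<partial>lborel)"
  proof (intro nn_integral_mono)
    fix u :: real
    show "ennreal ((1 - ln u) powr (-1/p) / u) * indicator {c..1} u * enn_powr (Ih p h 0 c) (1/p)
       \<le> ennreal ((1 - ln u) powr (-1/p) / u) * enn_powr (Ih p h 0 u) (1/p) * indicator {c..1} u"
    proof (cases "u \<in> {c..1}")
      case True
      then have "enn_powr (Ih p h 0 c) (1/p) \<le> enn_powr (Ih p h 0 u) (1/p)"
        using p by (intro enn_powr_mono Ih_mono_int) auto
      then show ?thesis using True by (auto intro: mult_left_mono)
    qed simp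
  qed
  also have "\<dots> \<le> Sn p h" by (rule S_part) (use c in auto)
  finally show ?thesis .
qed


definition Kq :: "real \<Rightarrow> real" where
  "Kq p = 1 / (p/(p-1) * (1 - (1 + ln 2) powr (-(1-1/p))))"

lemma Kq_pos: "1 < p \<Longrightarrow> 0 < Kq p"
proof -
  assume p: "1 < p"
  have "(1 + ln 2) powr (-(1-1/p)) < 1"
    using p by (intro powr_less_one) auto
  then show ?thesis using p unfolding Kq_def by (auto intro!: divide_pos_pos mult_pos_pos)
qed

lemma Qreal:
  fixes p t :: real
  assumes p: "1 < p" and t: "0 < t" "t < 1"
  shows "t powr (1/p) \<le> Kq p * (t * (p/(p-1) * ((1 - ln (phi1 t / 2)) powr (1-1/p) - 1)))"
proof -
  define b where "b = 1 - 1/p"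
  have b: "0 < b" "b < 1" using p unfolding b_def by auto
  define y where "y = 1 - ln (phi1 t / 2)"
  have y: "y = 1/t + ln 2" unfolding y_def using L_half[of "phi1 t"] phi_props[OF t] by simp
  have t1: "1 \<le> 1/t" using t by simp
  have l0: "0 < ln (2::real)" by simp
  have y1: "1 + ln 2 \<le> y" using y t1 by simp
  define k where "k = (1 + ln 2) powr (-b)"
  have lp: "1 < 1 + ln (2::real)" using l0 by linarith
  have ne: "1 + ln (2::real) \<noteq> 0" using l0 by linarith
  have k0: "0 < k" unfolding k_def using ne by simp
  have k1: "k < 1" unfolding k_def by (rule powr_less_one[OF lp]) (use b in simp)
  note k = k0 k1
  have "(1 + ln 2) powr b \<le> y powr b" using y1 b l0 by (intro powr_mono2) auto
  then have "k * (1 + ln 2) powr b \<le> k * y powr b" using k by simp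
  moreover have "k * (1 + ln 2) powr b = 1" unfolding k_def using ne
    by (simp add: powr_add[symmetric])
  ultimately have ky: "1 \<le> k * y powr b" by simp
  have "(1/t) powr b \<le> y powr b" using y t1 b l0 t by (intro powr_mono2) auto
  moreover have "t * (1/t) powr b = t powr (1/p)"
  proof -
    have "t * (1/t) powr b = t powr 1 * t powr (-b)" using t
      by (simp add: powr_divide powr_minus divide_inverse inverse_powr)
    also have "\<dots> = t powr (1 + - b)" by (rule powr_add[symmetric])
    also have "1 + - b = 1 - b" by simp
    also have "1 - b = 1/p" unfolding b_def by simp
    finally show ?thesis .
  qed
  ultimately have tb: "t powr (1/p) \<le> t * y powr b" using t
    by (metis mult_left_mono less_imp_le)
  have "(1 - k) * y powr b \<le> y powr b - 1" using ky by (simp add: algebra_simps)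
  then have "t * ((1 - k) * y powr b) \<le> t * (y powr b - 1)" using t by (intro mult_left_mono) auto
  then have "(1 - k) * t powr (1/p) \<le> t * (y powr b - 1)" using tb k
    by (smt (verit, best) mult.left_commute mult_left_mono)
  then have "t powr (1/p) \<le> t * (y powr b - 1) / (1 - k)" using k by (simp add: field_simps)
  also have "\<dots> = Kq p * (t * (p/(p-1) * (y powr b - 1)))"
  proof -
    have ring: "\<And>X q m :: real. q \<noteq> 0 \<Longrightarrow> m \<noteq> 0 \<Longrightarrow> t * X / m = 1/(q*m) * (t * (q * X))"
      by (simp add: field_simps)
    have Kqe: "Kq p = 1 / (p/(p-1) * (1 - k))" unfolding Kq_def k_def b_def by simp
    show ?thesis unfolding Kqe by (rule ring) (use p k in auto)
  qed
  finally show ?thesis unfolding y_def b_def .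
qed


lemma Wt_half:
  assumes p: "1 < p" and s: "0 < s" "s \<le> 1"
  shows "Wt p s \<le> 2 * Wt p (s/2)"
proof -
  have "(1 - ln s) powr (-1/p) \<le> 2 * ((1 - ln s) + ln 2) powr (-1/p)"
    using p s by (intro RA) auto
  then have "(1 - ln s) powr (-1/p) \<le> 2 * (1 - ln (s/2)) powr (-1/p)"
    unfolding L_half[OF s(1)] .
  then have "ennreal ((1 - ln s) powr (-1/p)) \<le> ennreal (2 * (1 - ln (s/2)) powr (-1/p))"
    by (rule ennreal_leI)
  also have "\<dots> = 2 * ennreal ((1 - ln (s/2)) powr (-1/p))" by (simp add: ennreal_mult)
  finally show ?thesis unfolding Wt_def .
qed

lemma Wt_le_t:
  assumes p: "1 < p" and t: "0 < t" "t < 1" and s: "0 < s" "s \<le> phi1 t"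
  shows "Wt p s \<le> ennreal (t powr (1/p))"
  unfolding Wt_def using RD[OF p t s] by (rule ennreal_leI)

lemma tpow_half:
  assumes p: "1 < p" and t: "0 < t" "t < 1"
  shows "t powr (1/p) \<le> 2 * (1 - ln (phi1 t / 2)) powr (-1/p)"
proof -
  have "(1/t) powr (-1/p) \<le> 2 * (1/t + ln 2) powr (-1/p)"
    using p t by (intro RA) auto
  moreover have "(1/t) powr (-1/p) = t powr (1/p)"
    using t by (simp add: powr_divide powr_minus_divide divide_inverse powr_minus inverse_powr)
  moreover have "1 - ln (phi1 t / 2) = 1/t + ln 2"
    using L_half[of "phi1 t"] phi_props[OF t] by simp
  ultimately show ?thesis by simp
qed

lemma Qlem:
  fixes h1 :: "real \<Rightarrow> real"
  assumes p: "1 < p" and t: "0 < t" "t < 1" and [measurable]: "h1 \<in> borel_measurable borel"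
  shows "ennreal (t powr (1/p)) * enn_powr (Ih p h1 0 (phi1 t / 2)) (1/p) \<le> ennreal (Kq p) * (ennreal t * Sn p h1)"
proof -
  define Y where "Y = p/(p-1) * ((1 - ln (phi1 t / 2)) powr (1-1/p) - 1)"
  define E where "E = enn_powr (Ih p h1 0 (phi1 t / 2)) (1/p)"
  have c: "0 < phi1 t / 2" "phi1 t / 2 \<le> 1" using phi_props[OF t] by auto
  have Y0: "0 \<le> Y"
  proof -
    have "1 \<le> 1 - ln (phi1 t / 2)" using c by simp
    then have "1 \<le> (1 - ln (phi1 t / 2)) powr (1-1/p)" using p by (intro ge_one_powr_ge_zero) auto
    then show ?thesis unfolding Y_def using p by simp
  qed
  have SL: "ennreal Y * E \<le> Sn p h1" unfolding Y_def E_def by (rule S_lower[OF p _ c]) simp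
  have "ennreal (t powr (1/p)) * E \<le> ennreal (Kq p * (t * Y)) * E"
    using Qreal[OF p t] unfolding Y_def by (intro mult_right_mono ennreal_leI) auto
  also have "ennreal (Kq p * (t * Y)) = ennreal (Kq p) * (ennreal t * ennreal Y)"
    using Kq_pos[OF p] t Y0 by (simp add: ennreal_mult)
  also have "\<dots> * E = ennreal (Kq p) * (ennreal t * (ennreal Y * E))" by (simp add: mult.assoc)
  also have "\<dots> \<le> ennreal (Kq p) * (ennreal t * Sn p h1)"
    by (intro mult_left_mono SL) auto
  finally show ?thesis unfolding E_def .
qed


locale dir2_setup =
  fixes p t :: real and h h0 h1 :: "real \<Rightarrow> real"
  assumes p: "1 < p" and t: "0 < t" "t < 1"
    and m0[measurable]: "h0 \<in> borel_measurable borel" and m1[measurable]: "h1 \<in> borel_measurable borel"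
    and nn: "\<And>x. 0 < x \<Longrightarrow> 0 \<le> h x \<and> 0 \<le> h0 x \<and> 0 \<le> h1 x"
    and sub: "\<And>x. 0 < x \<Longrightarrow> h x \<le> h0 (x/2) + h1 (x/2)"
begin

abbreviation "\<phi> \<equiv> phi1 t"
abbreviation "c0 \<equiv> 2 powr ((p+1)/p)"

lemma split_E:
  assumes "0 < \<alpha>"
  shows "enn_powr (Ih p h \<alpha> \<beta>) (1/p) \<le> ennreal c0 * (enn_powr (Ih p h0 (\<alpha>/2) (\<beta>/2)) (1/p) + enn_powr (Ih p h1 (\<alpha>/2) (\<beta>/2)) (1/p))"
  by (rule Esplit[OF p Isplit[OF p m0 m1 nn sub assms]])

lemma a_pos: "0 < 1/p" using p by simp

lemma A2:
  assumes s: "0 < s" "s < \<phi>"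
  shows "Wt p s * enn_powr (Ih p h s \<phi>) (1/p) \<le> ennreal c0 * (2 * Gn p h0 + ennreal (Kq p) * (ennreal t * Sn p h1))"
proof -
  have ph: "0 < \<phi>" "\<phi> < 1" using phi_props[OF t] by auto
  define E0 where "E0 = enn_powr (Ih p h0 (s/2) 1) (1/p)"
  define E1 where "E1 = enn_powr (Ih p h1 0 (\<phi>/2)) (1/p)"
  have "enn_powr (Ih p h s \<phi>) (1/p) \<le> ennreal c0 * (enn_powr (Ih p h0 (s/2) (\<phi>/2)) (1/p) + enn_powr (Ih p h1 (s/2) (\<phi>/2)) (1/p))"
    by (rule split_E) (use s in auto)
  also have "\<dots> \<le> ennreal c0 * (E0 + E1)" unfolding E0_def E1_def
    using s ph by (intro mult_left_mono add_mono enn_powr_mono a_pos Ih_mono_int) auto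
  finally have 1: "Wt p s * enn_powr (Ih p h s \<phi>) (1/p) \<le> Wt p s * (ennreal c0 * (E0 + E1))"
    by (rule mult_left_mono) simp
  also have "\<dots> = ennreal c0 * (Wt p s * E0 + Wt p s * E1)" by (simp add: algebra_simps)
  also have "\<dots> \<le> ennreal c0 * (2 * Gn p h0 + ennreal (Kq p) * (ennreal t * Sn p h1))"
  proof (intro mult_left_mono add_mono)
    have "Wt p s * E0 \<le> (2 * Wt p (s/2)) * E0"
      using Wt_half[OF p, of s] s ph by (intro mult_right_mono) auto
    also have "\<dots> = 2 * (Wt p (s/2) * E0)" by (simp add: mult.assoc)
    also have "\<dots> \<le> 2 * Gn p h0" unfolding E0_def
      using s ph by (intro mult_left_mono Gn_upper) auto
    finally show "Wt p s * E0 \<le> 2 * Gn p h0" .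
    have "Wt p s * E1 \<le> ennreal (t powr (1/p)) * E1"
      using Wt_le_t[OF p t, of s] s by (intro mult_right_mono) auto
    also have "\<dots> \<le> ennreal (Kq p) * (ennreal t * Sn p h1)" unfolding E1_def
      by (rule Qlem[OF p t m1])
    finally show "Wt p s * E1 \<le> ennreal (Kq p) * (ennreal t * Sn p h1)" .
  qed simp
  finally show ?thesis .
qed

lemma A2_sup: "An p h \<phi> \<le> ennreal c0 * (2 * Gn p h0 + ennreal (Kq p) * (ennreal t * Sn p h1))"
  unfolding An_def by (rule SUP_least) (use A2 in auto)

lemma B2: "ennreal t * Bn p h \<phi> \<le> ennreal c0 * (ennreal (2 * (p/(p-1))) * Gn p h0 + ennreal t * Sn p h1)"
proof -
  have ph: "0 < \<phi>" "\<phi> < 1" using phi_props[OF t] by auto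
  define F0 where "F0 = enn_powr (Ih p h0 (\<phi>/2) 1) (1/p)"
  define V where "V u = ennreal ((1 - ln u) powr (-1/p) / u)" for u :: real
  have Vm[measurable]: "V \<in> borel_measurable borel" unfolding V_def by measurable
  have E1m[measurable]: "(\<lambda>u. enn_powr (Ih p h1 0 u) (1/p)) \<in> borel_measurable borel"
    by (rule Ih_meas) simp
  have "Bn p h \<phi> \<le> (\<integral>\<^sup>+ u. ennreal c0 * (F0 * (V u * indicator {\<phi>..1} u)
       + V u * enn_powr (Ih p h1 0 u) (1/p) * indicator {\<phi>..1} u) \<partial>lborel)"
    unfolding Bn_def V_def[symmetric]
  proof (intro nn_integral_mono)
    fix u :: real
    show "V u * enn_powr (Ih p h \<phi> u) (1/p) * indicator {\<phi>..1} u \<le> ennreal c0 * (F0 * (V u * indicator {\<phi>..1} u)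
       + V u * enn_powr (Ih p h1 0 u) (1/p) * indicator {\<phi>..1} u)"
    proof (cases "u \<in> {\<phi>..1}")
      case True
      have "enn_powr (Ih p h \<phi> u) (1/p) \<le> ennreal c0 * (enn_powr (Ih p h0 (\<phi>/2) (u/2)) (1/p) + enn_powr (Ih p h1 (\<phi>/2) (u/2)) (1/p))"
        by (rule split_E) (use ph in auto)
      also have "\<dots> \<le> ennreal c0 * (F0 + enn_powr (Ih p h1 0 u) (1/p))" unfolding F0_def
        using True ph by (intro mult_left_mono add_mono enn_powr_mono a_pos Ih_mono_int) auto
      finally have "V u * enn_powr (Ih p h \<phi> u) (1/p) \<le> V u * (ennreal c0 * (F0 + enn_powr (Ih p h1 0 u) (1/p)))"
        by (rule mult_left_mono) simp
      then show ?thesis using True by (simp add: algebra_simps)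
    qed simp
  qed
  also have "\<dots> = ennreal c0 * (F0 * (\<integral>\<^sup>+ u\<in>{\<phi>..1}. V u \<partial>lborel)
      + (\<integral>\<^sup>+ u\<in>{\<phi>..1}. V u * enn_powr (Ih p h1 0 u) (1/p) \<partial>lborel))"
    by (simp add: nn_integral_cmult nn_integral_add)
  also have "\<dots> \<le> ennreal c0 * (F0 * ennreal (p/(p-1) * ((1/t) powr (1-1/p))) + Sn p h1)"
  proof (intro mult_left_mono add_mono)
    have "(\<integral>\<^sup>+ u\<in>{\<phi>..1}. V u \<partial>lborel) = ennreal (p/(p-1) * ((1 - ln \<phi>) powr (1-1/p) - 1))"
      unfolding V_def by (rule int_V[OF p]) (use ph in auto)
    also have "\<dots> \<le> ennreal (p/(p-1) * ((1/t) powr (1-1/p)))"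
      unfolding phi_props(3)[OF t] using p by (intro ennreal_leI mult_left_mono) auto
    finally show "(\<integral>\<^sup>+ u\<in>{\<phi>..1}. V u \<partial>lborel) \<le> ennreal (p/(p-1) * ((1/t) powr (1-1/p)))" .
    show "(\<integral>\<^sup>+ u\<in>{\<phi>..1}. V u * enn_powr (Ih p h1 0 u) (1/p) \<partial>lborel) \<le> Sn p h1"
      unfolding V_def by (rule S_part) (use ph in auto)
  qed auto
  finally have Bb: "Bn p h \<phi> \<le> ennreal c0 * (F0 * ennreal (p/(p-1) * ((1/t) powr (1-1/p))) + Sn p h1)" .
  have key: "t * (p/(p-1) * ((1/t) powr (1-1/p))) \<le> 2 * (p/(p-1)) * (1 - ln (\<phi>/2)) powr (-1/p)"
  proof -
    have "t * (1/t) powr (1-1/p) = t powr (1/p)"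
    proof -
      have "(1/t) powr (1-1/p) = inverse (t powr (1-1/p))" using t
        by (simp add: divide_inverse inverse_powr)
      also have "\<dots> = t powr (-(1-1/p))" by (rule powr_minus[symmetric])
      finally have "t * (1/t) powr (1-1/p) = t powr 1 * t powr (-(1-1/p))" using t by simp
      also have "\<dots> = t powr (1 + -(1-1/p))" by (rule powr_add[symmetric])
      also have "1 + -(1-1/p) = 1/p" by simp
      finally show ?thesis .
    qed
    then have "t * (p/(p-1) * ((1/t) powr (1-1/p))) = p/(p-1) * t powr (1/p)" by (simp add: algebra_simps)
    also have "\<dots> \<le> p/(p-1) * (2 * (1 - ln (\<phi>/2)) powr (-1/p))"
      using tpow_half[OF p t] p by (intro mult_left_mono) auto
    finally show ?thesis by (simp add: algebra_simps)
  qed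
  have "ennreal t * Bn p h \<phi> \<le> ennreal t * (ennreal c0 * (F0 * ennreal (p/(p-1) * ((1/t) powr (1-1/p))) + Sn p h1))"
    using Bb by (rule mult_left_mono) simp
  also have "\<dots> = ennreal c0 * (ennreal (t * (p/(p-1) * ((1/t) powr (1-1/p)))) * F0 + ennreal t * Sn p h1)"
  proof -
    have R0: "0 \<le> p/(p-1) * ((1/t) powr (1-1/p))" using p by simp
    have eR: "ennreal (t * (p/(p-1) * ((1/t) powr (1-1/p)))) = ennreal t * ennreal (p/(p-1) * ((1/t) powr (1-1/p)))"
      by (rule ennreal_mult) (use t R0 in auto)
    show ?thesis unfolding eR by (simp only: distrib_left ac_simps)
  qed
  also have "\<dots> \<le> ennreal c0 * (ennreal (2 * (p/(p-1))) * Gn p h0 + ennreal t * Sn p h1)"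
  proof (intro mult_left_mono add_mono)
    have "ennreal (t * (p/(p-1) * ((1/t) powr (1-1/p)))) * F0 \<le> ennreal (2 * (p/(p-1)) * (1 - ln (\<phi>/2)) powr (-1/p)) * F0"
      by (intro mult_right_mono ennreal_leI key) simp
    also have "\<dots> = ennreal (2 * (p/(p-1))) * (Wt p (\<phi>/2) * F0)"
    proof -
      have "ennreal (2 * (p/(p-1)) * (1 - ln (\<phi>/2)) powr (-1/p)) = ennreal (2 * (p/(p-1))) * ennreal ((1 - ln (\<phi>/2)) powr (-1/p))"
        by (rule ennreal_mult) (use p in auto)
      then show ?thesis unfolding Wt_def by (simp only: mult.assoc)
    qed
    also have "\<dots> \<le> ennreal (2 * (p/(p-1))) * Gn p h0" unfolding F0_def
      using ph by (intro mult_left_mono Gn_upper) auto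
    finally show "ennreal (t * (p/(p-1) * ((1/t) powr (1-1/p)))) * F0 \<le> ennreal (2 * (p/(p-1))) * Gn p h0" .
  qed auto
  finally show ?thesis .
qed

abbreviation "M2 \<equiv> 2 + 2 * (p/(p-1)) + Kq p + 1"

lemma M2_ge: "2 \<le> M2" "Kq p \<le> M2" "2 * (p/(p-1)) \<le> M2" "1 \<le> M2"
  using Kq_pos[OF p] p by auto

lemma le_M2: "0 \<le> x \<Longrightarrow> x \<le> M2 \<Longrightarrow> ennreal x * X + ennreal y * Y \<le> ennreal M2 * (X + Y)" if "0 \<le> y" "y \<le> M2"
proof -
  assume "0 \<le> x" "x \<le> M2"
  then have "ennreal x * X \<le> ennreal M2 * X" "ennreal y * Y \<le> ennreal M2 * Y"
    using that by (auto intro!: mult_right_mono ennreal_leI)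
  then show ?thesis by (simp add: distrib_left add_mono)
qed

lemma dir2: "An p h \<phi> + ennreal t * Bn p h \<phi> \<le> ennreal (2 * c0 * M2) * (Gn p h0 + ennreal t * Sn p h1)"
proof -
  let ?G = "Gn p h0" and ?T = "ennreal t * Sn p h1"
  have "An p h \<phi> + ennreal t * Bn p h \<phi> \<le> ennreal c0 * (ennreal 2 * ?G + ennreal (Kq p) * ?T)
      + ennreal c0 * (ennreal (2 * (p/(p-1))) * ?G + ennreal 1 * ?T)"
    using A2_sup B2 by (intro add_mono) auto
  also have "\<dots> \<le> ennreal c0 * (ennreal M2 * (?G + ?T)) + ennreal c0 * (ennreal M2 * (?G + ?T))"
    using M2_ge Kq_pos[OF p] p by (intro add_mono mult_left_mono le_M2) auto
  also have "\<dots> = ennreal (2 * c0 * M2) * (?G + ?T)"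
  proof -
    have e1: "ennreal (2 * c0 * M2) = ennreal (2 * c0) * ennreal M2"
      by (rule ennreal_mult) (use M2_ge in auto)
    have e2: "ennreal (2 * c0) = ennreal 2 * ennreal c0" by (rule ennreal_mult) auto
    have e3: "ennreal 2 = 1 + 1" by simp
    show ?thesis unfolding e1 e2 e3 by (simp only: distrib_right mult_1 mult.assoc)
  qed
  finally show ?thesis .
qed

end


locale dir1_setup =
  fixes p t :: real and h h0 h1 :: "real \<Rightarrow> real"
  assumes p: "1 < p" and t: "0 < t" "t < 1"
    and mh[measurable]: "h \<in> borel_measurable borel"
    and m0[measurable]: "h0 \<in> borel_measurable borel" and m1[measurable]: "h1 \<in> borel_measurable borel"
    and nn: "\<And>x. 0 < x \<Longrightarrow> 0 \<le> h x"
    and anti: "\<And>x y. 0 < x \<Longrightarrow> x \<le> y \<Longrightarrow> h y \<le> h x"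
    and b0: "\<And>x. 0 < x \<Longrightarrow> 0 \<le> h0 x \<and> h0 x \<le> max 0 (h x - h (phi1 t))"
    and b1: "\<And>x. 0 < x \<Longrightarrow> 0 \<le> h1 x \<and> h1 x \<le> min (h x) (h (phi1 t))"
begin

abbreviation "\<phi> \<equiv> phi1 t"
abbreviation "lm \<equiv> h (phi1 t)"
abbreviation "LM \<equiv> h (phi1 t) powr p"

lemma ph: "0 < \<phi>" "\<phi> < 1" using phi_props[OF t] by auto
lemma lam0: "0 \<le> lm" using nn ph by auto
lemma Lam0: "0 \<le> LM" by simp

lemma Gpart: "Gn p h0 \<le> An p h \<phi>"
  unfolding Gn_def
proof (rule SUP_least)
  fix s assume s: "s \<in> {0<..<1::real}"
  show "Wt p s * enn_powr (Ih p h0 s 1) (1/p) \<le> An p h \<phi>"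
  proof (cases "s < \<phi>")
    case True
    have "Ih p h0 s 1 \<le> Ih p h s \<phi>" unfolding Ih_def
    proof (intro nn_integral_mono)
      fix x :: real
      show "ennreal (h0 x powr p) * indicator {s..1} x \<le> ennreal (h x powr p) * indicator {s..\<phi>} x"
      proof (cases "x \<in> {s..1}")
        case xin: True
        then have x0: "0 < x" using s by auto
        show ?thesis
        proof (cases "x \<le> \<phi>")
          case True
          have "h0 x \<le> h x" using b0[OF x0] nn[OF x0] lam0 by auto
          then have "h0 x powr p \<le> h x powr p" using b0[OF x0] p by (intro powr_mono2) auto
          then show ?thesis using True xin by (auto intro: ennreal_leI)
        next
          case False
          then have "h x \<le> lm" using anti[of \<phi> x] ph by auto
          then have "h0 x = 0" using b0[OF x0] by auto
          then show ?thesis by simp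
        qed
      qed simp
    qed
    then have "Wt p s * enn_powr (Ih p h0 s 1) (1/p) \<le> Wt p s * enn_powr (Ih p h s \<phi>) (1/p)"
      using p by (intro mult_left_mono enn_powr_mono) auto
    also have "\<dots> \<le> An p h \<phi>" using s True by (intro An_upper) auto
    finally show ?thesis .
  next
    case False
    have "Ih p h0 s 1 = 0" unfolding Ih_def
    proof -
      have "(\<lambda>x. ennreal (h0 x powr p) * indicator {s..1} x) = (\<lambda>x. 0)"
      proof (rule ext)
        fix x :: real
        show "ennreal (h0 x powr p) * indicator {s..1} x = 0"
        proof (cases "x \<in> {s..1}")
          case True
          then have x0: "0 < x" using s by auto
          have "h x \<le> lm" using anti[of \<phi> x] ph False True by auto
          then have "h0 x = 0" using b0[OF x0] by auto
          then show ?thesis by simp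
        qed simp
      qed
      then show "(\<integral>\<^sup>+ x\<in>{s..1}. ennreal (h0 x powr p) \<partial>lborel) = 0" by simp
    qed
    then show ?thesis by simp
  qed
qed

lemma h1p_le: "0 < x \<Longrightarrow> h1 x powr p \<le> LM" "0 < x \<Longrightarrow> h1 x powr p \<le> h x powr p"
  using b1[of x] p by (auto intro!: powr_mono2)

lemma Ih1_small:
  assumes u: "0 \<le> u"
  shows "Ih p h1 0 u \<le> ennreal (LM * u)"
proof -
  have "Ih p h1 0 u \<le> (\<integral>\<^sup>+ x. ennreal LM * indicator {0..u} x \<partial>lborel)"
    unfolding Ih_def
  proof (rule nn_integral_mono_AE)
    show "AE x in lborel. ennreal (h1 x powr p) * indicator {0..u} x \<le> ennreal LM * indicator {0..u} x"
      using AE_lborel_singleton[of 0]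
    proof eventually_elim
      case (elim x)
      show ?case
      proof (cases "x \<in> {0..u}")
        case True
        then have "0 < x" using elim by auto
        then show ?thesis using True h1p_le by (auto intro: ennreal_leI)
      qed simp
    qed
  qed
  also have "\<dots> = ennreal LM * ennreal u" using u by (simp add: nn_integral_cmult_indicator)
  also have "\<dots> = ennreal (LM * u)" using u by (simp add: ennreal_mult)
  finally show ?thesis .
qed

lemma Ih1_big:
  assumes u: "\<phi> \<le> u"
  shows "Ih p h1 0 u \<le> ennreal (LM * \<phi>) + Ih p h \<phi> u"
proof -
  have "Ih p h1 0 u \<le> (\<integral>\<^sup>+ x. ennreal LM * indicator {0..\<phi>} x + ennreal (h x powr p) * indicator {\<phi>..u} x \<partial>lborel)"
    unfolding Ih_def
  proof (rule nn_integral_mono_AE)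
    show "AE x in lborel. ennreal (h1 x powr p) * indicator {0..u} x \<le> ennreal LM * indicator {0..\<phi>} x + ennreal (h x powr p) * indicator {\<phi>..u} x"
      using AE_lborel_singleton[of 0]
    proof eventually_elim
      case (elim x)
      show ?case
      proof (cases "x \<in> {0..u}")
        case True
        then have x0: "0 < x" using elim by auto
        show ?thesis
        proof (cases "x \<le> \<phi>")
          case True
          then have "ennreal (h1 x powr p) * indicator {0..u} x \<le> ennreal LM * indicator {0..\<phi>} x"
            using x0 \<open>x \<in> {0..u}\<close> h1p_le by (auto intro: ennreal_leI)
          then show ?thesis by (rule order_trans) simp
        next
          case False
          then have "ennreal (h1 x powr p) * indicator {0..u} x \<le> ennreal (h x powr p) * indicator {\<phi>..u} x"
            using x0 \<open>x \<in> {0..u}\<close> h1p_le by (auto intro: ennreal_leI)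
          then show ?thesis by (rule order_trans) simp
        qed
      qed simp
    qed
  qed
  also have "\<dots> = ennreal LM * ennreal \<phi> + Ih p h \<phi> u"
    unfolding Ih_def using ph by (simp add: nn_integral_add nn_integral_cmult_indicator)
  also have "\<dots> = ennreal (LM * \<phi>) + Ih p h \<phi> u" using ph by (simp add: ennreal_mult)
  finally show ?thesis .
qed

lemma Sbound:
  "Sn p h1 \<le> ennreal (t powr (1/p) * LM powr (1/p) * (p * \<phi> powr (1/p)))
     + ennreal ((\<phi> * LM) powr (1/p) * (p/(p-1) * (1/t) powr (1-1/p))) + Bn p h \<phi>"
proof -
  define V where "V u = ennreal ((1 - ln u) powr (-1/p) / u)" for u :: real
  have Vm[measurable]: "V \<in> borel_measurable borel" unfolding V_def by measurable
  have Ehm[measurable]: "(\<lambda>u. enn_powr (Ih p h \<phi> u) (1/p)) \<in> borel_measurable borel"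
    by (rule Ih_meas) simp
  define C1 where "C1 = t powr (1/p) * LM powr (1/p)"
  have C10: "0 \<le> C1" unfolding C1_def by simp
  have "Sn p h1 \<le> (\<integral>\<^sup>+ u. ennreal C1 * (ennreal (u powr (1/p - 1)) * indicator {0..\<phi>} u)
      + (ennreal ((\<phi> * LM) powr (1/p)) * (V u * indicator {\<phi>..1} u)
      + V u * enn_powr (Ih p h \<phi> u) (1/p) * indicator {\<phi>..1} u) \<partial>lborel)"
    unfolding Sn_def V_def[symmetric]
  proof (intro nn_integral_mono)
    fix u :: real
    show "V u * enn_powr (Ih p h1 0 u) (1/p) * indicator {0<..<1} u \<le> ennreal C1 * (ennreal (u powr (1/p - 1)) * indicator {0..\<phi>} u)
      + (ennreal ((\<phi> * LM) powr (1/p)) * (V u * indicator {\<phi>..1} u)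
      + V u * enn_powr (Ih p h \<phi> u) (1/p) * indicator {\<phi>..1} u)"
    proof (cases "u \<in> {0<..<1}")
      case uin: True
      show ?thesis
      proof (cases "u < \<phi>")
        case True
        have "enn_powr (Ih p h1 0 u) (1/p) \<le> enn_powr (ennreal (LM * u)) (1/p)"
          using uin p by (intro enn_powr_mono Ih1_small) auto
        also have "\<dots> = ennreal ((LM * u) powr (1/p))" using uin by (simp add: enn_powr_ennreal)
        finally have "V u * enn_powr (Ih p h1 0 u) (1/p) \<le> V u * ennreal ((LM * u) powr (1/p))"
          by (rule mult_left_mono) simp
        also have "\<dots> = ennreal ((1 - ln u) powr (-1/p) / u * (LM * u) powr (1/p))"
          unfolding V_def by (rule ennreal_mult[symmetric]) (use uin in auto)
        also have "\<dots> \<le> ennreal (C1 * u powr (1/p - 1))"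
        proof (rule ennreal_leI)
          have "(1 - ln u) powr (-1/p) / u * (LM * u) powr (1/p)
              = (1 - ln u) powr (-1/p) * LM powr (1/p) * (u powr (1/p) / u)"
            using uin by (simp add: powr_mult)
          also have "u powr (1/p) / u = u powr (1/p - 1)"
            using uin by (simp add: powr_diff)
          also have "(1 - ln u) powr (-1/p) * LM powr (1/p) * u powr (1/p - 1)
              \<le> t powr (1/p) * LM powr (1/p) * u powr (1/p - 1)"
            using RD[OF p t, of u] uin True by (intro mult_right_mono) auto
          finally show "(1 - ln u) powr (-1/p) / u * (LM * u) powr (1/p) \<le> C1 * u powr (1/p - 1)"
            unfolding C1_def .
        qed
        also have "\<dots> = ennreal C1 * (ennreal (u powr (1/p - 1)) * indicator {0..\<phi>} u)"
          using uin True C10 by (simp add: ennreal_mult)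
        finally show ?thesis using uin by (auto intro: order_trans)
      next
        case False
        have "enn_powr (Ih p h1 0 u) (1/p) \<le> enn_powr (ennreal (LM * \<phi>) + Ih p h \<phi> u) (1/p)"
          using False p by (intro enn_powr_mono Ih1_big) auto
        also have "\<dots> \<le> enn_powr (ennreal (LM * \<phi>)) (1/p) + enn_powr (Ih p h \<phi> u) (1/p)"
          using p by (intro enn_powr_subadd) auto
        also have "enn_powr (ennreal (LM * \<phi>)) (1/p) = ennreal ((\<phi> * LM) powr (1/p))"
          using ph by (simp add: enn_powr_ennreal mult.commute)
        finally have "V u * enn_powr (Ih p h1 0 u) (1/p) \<le> V u * (ennreal ((\<phi> * LM) powr (1/p)) + enn_powr (Ih p h \<phi> u) (1/p))"
          by (rule mult_left_mono) simp
        then show ?thesis using uin False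
          by (auto simp: distrib_left mult_ac intro: order_trans)
      qed
    qed simp
  qed
  also have "\<dots> = ennreal C1 * (\<integral>\<^sup>+ u\<in>{0..\<phi>}. ennreal (u powr (1/p - 1)) \<partial>lborel)
      + (ennreal ((\<phi> * LM) powr (1/p)) * (\<integral>\<^sup>+ u\<in>{\<phi>..1}. V u \<partial>lborel) + Bn p h \<phi>)"
    unfolding Bn_def V_def[symmetric] by (simp add: nn_integral_add nn_integral_cmult)
  also have "\<dots> \<le> ennreal (t powr (1/p) * LM powr (1/p) * (p * \<phi> powr (1/p)))
     + (ennreal ((\<phi> * LM) powr (1/p) * (p/(p-1) * (1/t) powr (1-1/p))) + Bn p h \<phi>)"
  proof (intro add_mono order_refl)
    show "ennreal C1 * (\<integral>\<^sup>+ u\<in>{0..\<phi>}. ennreal (u powr (1/p - 1)) \<partial>lborel)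
        \<le> ennreal (t powr (1/p) * LM powr (1/p) * (p * \<phi> powr (1/p)))"
      unfolding int_upow[OF p less_imp_le[OF ph(1)]] C1_def using p by (simp add: ennreal_mult)
    have "(\<integral>\<^sup>+ u\<in>{\<phi>..1}. V u \<partial>lborel) = ennreal (p/(p-1) * ((1 - ln \<phi>) powr (1-1/p) - 1))"
      unfolding V_def by (rule int_V[OF p]) (use ph in auto)
    also have "\<dots> \<le> ennreal (p/(p-1) * ((1/t) powr (1-1/p)))"
      unfolding phi_props(3)[OF t] using p by (intro ennreal_leI mult_left_mono) auto
    finally have "ennreal ((\<phi> * LM) powr (1/p)) * (\<integral>\<^sup>+ u\<in>{\<phi>..1}. V u \<partial>lborel)
       \<le> ennreal ((\<phi> * LM) powr (1/p)) * ennreal (p/(p-1) * ((1/t) powr (1-1/p)))"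
      by (rule mult_left_mono) simp
    also have "\<dots> = ennreal ((\<phi> * LM) powr (1/p) * (p/(p-1) * (1/t) powr (1-1/p)))"
      by (rule ennreal_mult[symmetric]) (use p in auto)
    finally show "ennreal ((\<phi> * LM) powr (1/p)) * (\<integral>\<^sup>+ u\<in>{\<phi>..1}. V u \<partial>lborel)
       \<le> ennreal ((\<phi> * LM) powr (1/p) * (p/(p-1) * (1/t) powr (1-1/p)))" .
  qed
  finally show ?thesis by (simp add: add.assoc)
qed

definition "X = t powr (1/p) * (\<phi> * LM) powr (1/p)"

lemma X0: "0 \<le> X" unfolding X_def by simp

lemma Xbound: "ennreal X \<le> 4 * An p h \<phi>"
proof -
  have I: "ennreal (LM * (\<phi>/2)) \<le> Ih p h (\<phi>/2) \<phi>"
  proof -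
    have "ennreal (LM * (\<phi>/2)) = (\<integral>\<^sup>+ x. ennreal LM * indicator {\<phi>/2..\<phi>} x \<partial>lborel)"
      using ph by (simp add: nn_integral_cmult_indicator ennreal_mult[symmetric])
    also have "\<dots> \<le> Ih p h (\<phi>/2) \<phi>" unfolding Ih_def
    proof (intro nn_integral_mono)
      fix x :: real
      show "ennreal LM * indicator {\<phi>/2..\<phi>} x \<le> ennreal (h x powr p) * indicator {\<phi>/2..\<phi>} x"
      proof (cases "x \<in> {\<phi>/2..\<phi>}")
        case True
        then have "0 < x" using ph by auto
        then have "lm \<le> h x" using anti[of x \<phi>] True by auto
        then have "LM \<le> h x powr p" using lam0 p by (intro powr_mono2) auto
        then show ?thesis using True by (auto intro: ennreal_leI)
      qed simp
    qed
    finally show ?thesis .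
  qed
  have "X \<le> 4 * ((1 - ln (\<phi>/2)) powr (-1/p) * (LM * (\<phi>/2)) powr (1/p))"
  proof -
    have a: "t powr (1/p) \<le> 2 * (1 - ln (\<phi>/2)) powr (-1/p)" by (rule tpow_half[OF p t])
    have "(\<phi> * LM) powr (1/p) = 2 powr (1/p) * (LM * (\<phi>/2)) powr (1/p)"
      using ph by (simp add: powr_mult[symmetric] mult.commute)
    also have "\<dots> \<le> 2 * (LM * (\<phi>/2)) powr (1/p)"
    proof (rule mult_right_mono)
      show "2 powr (1/p) \<le> (2::real)" using powr_mono[of "1/p" 1 2] p by simp
    qed simp
    finally have b: "(\<phi> * LM) powr (1/p) \<le> 2 * (LM * (\<phi>/2)) powr (1/p)" .
    have "X \<le> (2 * (1 - ln (\<phi>/2)) powr (-1/p)) * (2 * (LM * (\<phi>/2)) powr (1/p))"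
      unfolding X_def by (intro mult_mono a b) auto
    then show ?thesis by (simp add: algebra_simps)
  qed
  then have "ennreal X \<le> ennreal (4 * ((1 - ln (\<phi>/2)) powr (-1/p) * (LM * (\<phi>/2)) powr (1/p)))"
    by (rule ennreal_leI)
  also have "\<dots> = 4 * (Wt p (\<phi>/2) * enn_powr (ennreal (LM * (\<phi>/2))) (1/p))"
    unfolding Wt_def using ph by (simp add: ennreal_mult enn_powr_ennreal)
  also have "\<dots> \<le> 4 * (Wt p (\<phi>/2) * enn_powr (Ih p h (\<phi>/2) \<phi>) (1/p))"
    using p by (intro mult_left_mono enn_powr_mono I) auto
  also have "\<dots> \<le> 4 * An p h \<phi>"
    using ph by (intro mult_left_mono An_upper) auto
  finally show ?thesis .
qed

lemma dir1: "Gn p h0 + ennreal t * Sn p h1 \<le> ennreal (1 + 4 * (p + p/(p-1))) * (An p h \<phi> + ennreal t * Bn p h \<phi>)"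
proof -
  let ?q = "p/(p-1)"
  have t1: "ennreal t * ennreal (t powr (1/p) * LM powr (1/p) * (p * \<phi> powr (1/p))) \<le> ennreal (p * X)"
  proof -
    have "ennreal t * ennreal (t powr (1/p) * LM powr (1/p) * (p * \<phi> powr (1/p)))
        = ennreal (t * (p * X))"
      unfolding X_def using t ph p by (simp add: ennreal_mult[symmetric] powr_mult algebra_simps)
    also have "\<dots> \<le> ennreal (p * X)"
      using t p X0 by (intro ennreal_leI) (auto intro: mult_left_le_one_le)
    finally show ?thesis .
  qed
  have t2: "ennreal t * ennreal ((\<phi> * LM) powr (1/p) * (?q * (1/t) powr (1-1/p))) \<le> ennreal (?q * X)"
  proof -
    have tt: "t * (1/t) powr (1-1/p) = t powr (1/p)"
    proof -
      have "(1/t) powr (1-1/p) = inverse (t powr (1-1/p))" using t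
        by (simp add: divide_inverse inverse_powr)
      also have "\<dots> = t powr (-(1-1/p))" by (rule powr_minus[symmetric])
      finally have "t * (1/t) powr (1-1/p) = t powr 1 * t powr (-(1-1/p))" using t by simp
      also have "\<dots> = t powr (1 + -(1-1/p))" by (rule powr_add[symmetric])
      also have "1 + -(1-1/p) = 1/p" by simp
      finally show ?thesis .
    qed
    have "ennreal t * ennreal ((\<phi> * LM) powr (1/p) * (?q * (1/t) powr (1-1/p)))
       = ennreal (t * ((\<phi> * LM) powr (1/p) * (?q * (1/t) powr (1-1/p))))"
      by (rule ennreal_mult[symmetric]) (use t p in auto)
    also have "t * ((\<phi> * LM) powr (1/p) * (?q * (1/t) powr (1-1/p))) = ?q * X"
      unfolding X_def using tt by (simp add: algebra_simps)
    finally show ?thesis by simp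
  qed
  have "Gn p h0 + ennreal t * Sn p h1 \<le> An p h \<phi> + ennreal t * (ennreal (t powr (1/p) * LM powr (1/p) * (p * \<phi> powr (1/p)))
     + ennreal ((\<phi> * LM) powr (1/p) * (?q * (1/t) powr (1-1/p))) + Bn p h \<phi>)"
    by (intro add_mono Gpart mult_left_mono Sbound) simp
  also have "\<dots> = An p h \<phi> + (ennreal t * ennreal (t powr (1/p) * LM powr (1/p) * (p * \<phi> powr (1/p)))
     + ennreal t * ennreal ((\<phi> * LM) powr (1/p) * (?q * (1/t) powr (1-1/p)))) + ennreal t * Bn p h \<phi>"
    by (simp add: distrib_left add.assoc)
  also have "\<dots> \<le> An p h \<phi> + (ennreal (p * X) + ennreal (?q * X)) + ennreal t * Bn p h \<phi>"
    by (intro add_mono t1 t2 order_refl)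
  also have "ennreal (p * X) + ennreal (?q * X) \<le> ennreal (p + ?q) * (4 * An p h \<phi>)"
  proof -
    have "ennreal (p * X) + ennreal (?q * X) = ennreal (p + ?q) * ennreal X"
      using p X0 by (simp add: ennreal_plus[symmetric] ennreal_mult[symmetric] distrib_right del: ennreal_plus)
    also have "\<dots> \<le> ennreal (p + ?q) * (4 * An p h \<phi>)" by (intro mult_left_mono Xbound) simp
    finally show ?thesis .
  qed
  then have "An p h \<phi> + (ennreal (p * X) + ennreal (?q * X)) + ennreal t * Bn p h \<phi>
      \<le> An p h \<phi> + ennreal (p + ?q) * (4 * An p h \<phi>) + ennreal t * Bn p h \<phi>"
    by (intro add_mono order_refl)
  also have "An p h \<phi> + ennreal (p + ?q) * (4 * An p h \<phi>) + ennreal t * Bn p h \<phi>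
      \<le> ennreal (1 + 4 * (p + ?q)) * (An p h \<phi> + ennreal t * Bn p h \<phi>)"
  proof -
    have q0: "0 \<le> p + ?q" using p by simp
    have e1: "ennreal (1 + 4 * (p + ?q)) = ennreal 1 + ennreal (4 * (p + ?q))"
      by (rule ennreal_plus) (use q0 in auto)
    have e2: "ennreal (4 * (p + ?q)) = ennreal 4 * ennreal (p + ?q)"
      by (rule ennreal_mult) (use q0 in auto)
    have e: "ennreal (1 + 4 * (p + ?q)) = 1 + 4 * ennreal (p + ?q)"
      unfolding e1 e2 by simp
    have "An p h \<phi> + ennreal (p + ?q) * (4 * An p h \<phi>) = ennreal (1 + 4 * (p + ?q)) * An p h \<phi>"
      unfolding e by (simp add: algebra_simps)
    moreover have "ennreal t * Bn p h \<phi> \<le> ennreal (1 + 4 * (p + ?q)) * (ennreal t * Bn p h \<phi>)"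
    proof -
      have "ennreal t * Bn p h \<phi> = 1 * (ennreal t * Bn p h \<phi>)" by simp
      also have "\<dots> \<le> ennreal (1 + 4 * (p + ?q)) * (ennreal t * Bn p h \<phi>)"
        using p by (intro mult_right_mono) (auto simp: ennreal_1[symmetric] simp del: ennreal_1 intro!: ennreal_leI)
      finally show ?thesis .
    qed
    ultimately show ?thesis by (simp add: distrib_left add_mono)
  qed
  finally show ?thesis .
qed

end


lemma clamp_facts:
  fixes z lm :: real assumes "0 \<le> lm"
  shows "\<bar>z - max (-lm) (min lm z)\<bar> = max 0 (\<bar>z\<bar> - lm)" "\<bar>max (-lm) (min lm z)\<bar> = min \<bar>z\<bar> lm"
  using assms by (auto simp: abs_if max_def min_def)

lemma Krhs_eq: "Krhs p \<Omega> f t = An p (drearr \<Omega> f) (phi1 t) + ennreal t * Bn p (drearr \<Omega> f) (phi1 t)"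
  unfolding Krhs_def An_def Bn_def Wt_def Ih_def ..

lemma grand_eq: "grand_norm p \<Omega> g = Gn p (drearr \<Omega> g)"
  unfolding grand_norm_def Gn_def Wt_def Ih_def ..

lemma small_eq: "small_norm p \<Omega> g = Sn p (drearr \<Omega> g)"
  unfolding small_norm_def Sn_def Ih_def ..

theorem theorem6p1:
  fixes p :: real and \<Omega> :: "'a::euclidean_space set"
  assumes "1 < p" and "bounded \<Omega>" and "open \<Omega>" and "emeasure lebesgue \<Omega> = 1"
  shows "\<exists>C::real. C > 0 \<and> (\<forall>f t. f \<in> borel_measurable lebesgue \<longrightarrow> in_sum_space p \<Omega> f \<longrightarrow>
           t \<in> {0<..<1} \<longrightarrow>
           Kfun p \<Omega> f t \<le> ennreal C * Krhs p \<Omega> f t \<and>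
           Krhs p \<Omega> f t \<le> ennreal C * Kfun p \<Omega> f t)"
proof -
  have p: "1 < p" by fact
  have \<Omega>s: "\<Omega> \<in> sets lebesgue" using assms(3) by (metis borel_open sets_completionI_sets sets_lborel)
  have \<Omega>1: "emeasure lebesgue \<Omega> = 1" by fact
  define C1 where "C1 = 1 + 4 * (p + p/(p-1))"
  define C2 where "C2 = 2 * 2 powr ((p+1)/p) * (2 + 2 * (p/(p-1)) + Kq p + 1)"
  have C1pos: "0 < C1" unfolding C1_def using p by (simp add: add_pos_nonneg)
  have q0: "0 < p / (p - 1)" using p by simp
  have "0 < 2 + 2 * (p / (p - 1)) + Kq p + 1" using q0 Kq_pos[OF p] by linarith
  then have C2pos: "0 < C2" unfolding C2_def by (intro mult_pos_pos) auto
  define C where "C = max C1 C2"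
  have Cpos: "0 < C" unfolding C_def using C1pos by simp
  have main: "Kfun p \<Omega> f t \<le> ennreal C * Krhs p \<Omega> f t \<and> Krhs p \<Omega> f t \<le> ennreal C * Kfun p \<Omega> f t"
    if f: "f \<in> borel_measurable lebesgue" and t: "0 < t" "t < 1" for f t
  proof
    define h where "h = drearr \<Omega> f"
    define \<phi> where "\<phi> = phi1 t"
    have ph: "0 < \<phi>" "\<phi> < 1" unfolding \<phi>_def using phi_props[OF t] by auto
    have hm: "h \<in> borel_measurable borel" unfolding h_def by (rule drearr_meas[OF \<Omega>s \<Omega>1 f])
    show "Kfun p \<Omega> f t \<le> ennreal C * Krhs p \<Omega> f t"
    proof (cases "Krhs p \<Omega> f t = \<infinity>")
      case True
      then show ?thesis using Cpos by (simp add: ennreal_mult_top)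
    next
      case False
      define lm where "lm = h \<phi>"
      have lm0: "0 \<le> lm" unfolding lm_def h_def by (rule drearr_nonneg[OF \<Omega>s \<Omega>1 f ph(1)])
      define g1 where "g1 x = max (-lm) (min lm (f x))" for x
      define g0 where "g0 x = f x - g1 x" for x
      have g1m: "g1 \<in> borel_measurable lebesgue" unfolding g1_def using f by measurable
      have g0m: "g0 \<in> borel_measurable lebesgue" unfolding g0_def using f g1m by measurable
      interpret D: dir1_setup p t h "drearr \<Omega> g0" "drearr \<Omega> g1"
      proof
        show "1 < p" "0 < t" "t < 1" by fact+
        show "h \<in> borel_measurable borel" by (rule hm)
        show "drearr \<Omega> g0 \<in> borel_measurable borel" by (rule drearr_meas[OF \<Omega>s \<Omega>1 g0m])
        show "drearr \<Omega> g1 \<in> borel_measurable borel" by (rule drearr_meas[OF \<Omega>s \<Omega>1 g1m])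
        show "0 \<le> h x" if "0 < x" for x unfolding h_def by (rule drearr_nonneg[OF \<Omega>s \<Omega>1 f that])
        show "h y \<le> h x" if "0 < x" "x \<le> y" for x y unfolding h_def by (rule drearr_antimono[OF \<Omega>s \<Omega>1 f that])
        show "0 \<le> drearr \<Omega> g0 x \<and> drearr \<Omega> g0 x \<le> max 0 (h x - h (phi1 t))" if x: "0 < x" for x
        proof
          show "0 \<le> drearr \<Omega> g0 x" by (rule drearr_nonneg[OF \<Omega>s \<Omega>1 g0m x])
          show "drearr \<Omega> g0 x \<le> max 0 (h x - h (phi1 t))"
          proof (rule drearr_le[OF \<Omega>s \<Omega>1])
            show "0 \<le> max 0 (h x - h (phi1 t))" by simp
            have "{x'\<in>\<Omega>. max 0 (h x - h (phi1 t)) < \<bar>g0 x'\<bar>} \<subseteq> {x'\<in>\<Omega>. h x < \<bar>f x'\<bar>}"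
            proof
              fix x' assume "x' \<in> {x'\<in>\<Omega>. max 0 (h x - h (phi1 t)) < \<bar>g0 x'\<bar>}"
              then have "x' \<in> \<Omega>" "max 0 (h x - lm) < max 0 (\<bar>f x'\<bar> - lm)"
                using clamp_facts(1)[OF lm0, of "f x'"] unfolding g0_def g1_def lm_def \<phi>_def by auto
              then show "x' \<in> {x'\<in>\<Omega>. h x < \<bar>f x'\<bar>}" by auto
            qed
            then have "emeasure lebesgue {x'\<in>\<Omega>. max 0 (h x - h (phi1 t)) < \<bar>g0 x'\<bar>} \<le> emeasure lebesgue {x'\<in>\<Omega>. h x < \<bar>f x'\<bar>}"
              by (rule emeasure_mono) (rule D_sets[OF \<Omega>s \<Omega>1 f])
            also have "\<dots> \<le> ennreal x" unfolding h_def by (rule drearr_attain[OF \<Omega>s \<Omega>1 f x])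
            finally show "emeasure lebesgue {x'\<in>\<Omega>. max 0 (h x - h (phi1 t)) < \<bar>g0 x'\<bar>} \<le> ennreal x" .
          qed
        qed
        show "0 \<le> drearr \<Omega> g1 x \<and> drearr \<Omega> g1 x \<le> min (h x) (h (phi1 t))" if x: "0 < x" for x
        proof
          show "0 \<le> drearr \<Omega> g1 x" by (rule drearr_nonneg[OF \<Omega>s \<Omega>1 g1m x])
          show "drearr \<Omega> g1 x \<le> min (h x) (h (phi1 t))"
          proof (rule drearr_le[OF \<Omega>s \<Omega>1])
            show "0 \<le> min (h x) (h (phi1 t))"
              using drearr_nonneg[OF \<Omega>s \<Omega>1 f x] lm0 unfolding h_def lm_def \<phi>_def by simp
            have "{x'\<in>\<Omega>. min (h x) (h (phi1 t)) < \<bar>g1 x'\<bar>} \<subseteq> {x'\<in>\<Omega>. h x < \<bar>f x'\<bar>}"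
            proof
              fix x' assume "x' \<in> {x'\<in>\<Omega>. min (h x) (h (phi1 t)) < \<bar>g1 x'\<bar>}"
              then have "x' \<in> \<Omega>" "min (h x) lm < min \<bar>f x'\<bar> lm"
                using clamp_facts(2)[OF lm0, of "f x'"] unfolding g1_def lm_def \<phi>_def by auto
              then show "x' \<in> {x'\<in>\<Omega>. h x < \<bar>f x'\<bar>}" by auto
            qed
            then have "emeasure lebesgue {x'\<in>\<Omega>. min (h x) (h (phi1 t)) < \<bar>g1 x'\<bar>} \<le> emeasure lebesgue {x'\<in>\<Omega>. h x < \<bar>f x'\<bar>}"
              by (rule emeasure_mono) (rule D_sets[OF \<Omega>s \<Omega>1 f])
            also have "\<dots> \<le> ennreal x" unfolding h_def by (rule drearr_attain[OF \<Omega>s \<Omega>1 f x])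
            finally show "emeasure lebesgue {x'\<in>\<Omega>. min (h x) (h (phi1 t)) < \<bar>g1 x'\<bar>} \<le> ennreal x" .
          qed
        qed
      qed
      have K1: "grand_norm p \<Omega> g0 + ennreal t * small_norm p \<Omega> g1 \<le> ennreal C1 * Krhs p \<Omega> f t"
        unfolding grand_eq small_eq Krhs_eq C1_def h_def[symmetric] using D.dir1 .
      have fin: "ennreal C1 * Krhs p \<Omega> f t < \<infinity>"
        using False by (auto simp: ennreal_mult_eq_top_iff less_top[symmetric])
      have "grand_norm p \<Omega> g0 \<le> grand_norm p \<Omega> g0 + ennreal t * small_norm p \<Omega> g1" by simp
      then have gfin: "grand_norm p \<Omega> g0 < \<infinity>" using K1 fin by (metis le_less_trans order_trans)
      have "ennreal t * small_norm p \<Omega> g1 \<le> grand_norm p \<Omega> g0 + ennreal t * small_norm p \<Omega> g1" by simp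
      then have "ennreal t * small_norm p \<Omega> g1 < \<infinity>" using K1 fin by (metis le_less_trans order_trans)
      then have sfin: "small_norm p \<Omega> g1 < \<infinity>" using t by (auto simp: ennreal_mult_eq_top_iff less_top[symmetric])
      have "Kfun p \<Omega> f t \<le> grand_norm p \<Omega> g0 + ennreal t * small_norm p \<Omega> g1"
        unfolding Kfun_def
        using gfin sfin by (intro INF_lower2[of "(g0, g1)"]) (auto simp: in_grand_def in_small_def g0m g1m g0_def less_top)
      also have "\<dots> \<le> ennreal C1 * Krhs p \<Omega> f t" by (rule K1)
      also have "\<dots> \<le> ennreal C * Krhs p \<Omega> f t" unfolding C_def by (intro mult_right_mono ennreal_leI) auto
      finally show ?thesis .
    qed
    have each: "ennreal (1/C2) * Krhs p \<Omega> f t \<le> grand_norm p \<Omega> g0 + ennreal t * small_norm p \<Omega> g1"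
      if g0: "g0 \<in> borel_measurable lebesgue" and g1: "g1 \<in> borel_measurable lebesgue"
        and eq: "\<forall>x\<in>\<Omega>. f x = g0 x + g1 x" for g0 g1
    proof -
      interpret D: dir2_setup p t h "drearr \<Omega> g0" "drearr \<Omega> g1"
      proof
        show "1 < p" "0 < t" "t < 1" by fact+
        show "drearr \<Omega> g0 \<in> borel_measurable borel" by (rule drearr_meas[OF \<Omega>s \<Omega>1 g0])
        show "drearr \<Omega> g1 \<in> borel_measurable borel" by (rule drearr_meas[OF \<Omega>s \<Omega>1 g1])
        show "0 \<le> h x \<and> 0 \<le> drearr \<Omega> g0 x \<and> 0 \<le> drearr \<Omega> g1 x" if "0 < x" for x
          unfolding h_def using drearr_nonneg[OF \<Omega>s \<Omega>1 _ that] f g0 g1 by auto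
        show "h x \<le> drearr \<Omega> g0 (x/2) + drearr \<Omega> g1 (x/2)" if "0 < x" for x
        proof -
          have "drearr \<Omega> f (x/2 + x/2) \<le> drearr \<Omega> g0 (x/2) + drearr \<Omega> g1 (x/2)"
            using that eq by (intro drearr_subadd[OF \<Omega>s \<Omega>1 g0 g1]) auto
          then show ?thesis unfolding h_def by simp
        qed
      qed
      have "Krhs p \<Omega> f t \<le> ennreal C2 * (grand_norm p \<Omega> g0 + ennreal t * small_norm p \<Omega> g1)"
        unfolding grand_eq small_eq Krhs_eq C2_def h_def[symmetric] using D.dir2 by simp
      then have "ennreal (1/C2) * Krhs p \<Omega> f t \<le> ennreal (1/C2) * (ennreal C2 * (grand_norm p \<Omega> g0 + ennreal t * small_norm p \<Omega> g1))"
        by (rule mult_left_mono) simp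
      also have "\<dots> = grand_norm p \<Omega> g0 + ennreal t * small_norm p \<Omega> g1"
        using C2pos by (simp add: mult.assoc[symmetric] ennreal_mult[symmetric])
      finally show ?thesis .
    qed
    have "ennreal (1/C2) * Krhs p \<Omega> f t \<le> Kfun p \<Omega> f t"
      unfolding Kfun_def
    proof (rule INF_greatest)
      fix z assume "z \<in> {(g0, g1). in_grand p \<Omega> g0 \<and> in_small p \<Omega> g1 \<and> (\<forall>x\<in>\<Omega>. f x = g0 x + g1 x)}"
      then obtain g0 g1 where z: "z = (g0, g1)" "in_grand p \<Omega> g0" "in_small p \<Omega> g1" "\<forall>x\<in>\<Omega>. f x = g0 x + g1 x"
        by auto
      show "ennreal (1/C2) * Krhs p \<Omega> f t \<le> (case z of (g0, g1) \<Rightarrow> grand_norm p \<Omega> g0 + ennreal t * small_norm p \<Omega> g1)"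
        using each z by (auto simp: in_grand_def in_small_def)
    qed
    then have "ennreal C2 * (ennreal (1/C2) * Krhs p \<Omega> f t) \<le> ennreal C2 * Kfun p \<Omega> f t"
      by (rule mult_left_mono) simp
    moreover have "ennreal C2 * (ennreal (1/C2) * Krhs p \<Omega> f t) = Krhs p \<Omega> f t"
      using C2pos by (simp add: mult.assoc[symmetric] ennreal_mult[symmetric])
    moreover have "ennreal C2 * Kfun p \<Omega> f t \<le> ennreal C * Kfun p \<Omega> f t"
      unfolding C_def by (intro mult_right_mono ennreal_leI) auto
    ultimately show "Krhs p \<Omega> f t \<le> ennreal C * Kfun p \<Omega> f t" by simp
  qed
  show ?thesis using Cpos main by auto
qed


end
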